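(* Consider the following conditions on $f$ and the auxiliary flow $\Phi$: (a-1) for every set $B$ closed and bounded in $D$, the restriction $f|_B$ is proper; (a-2) $f$ is a local $C^1$ diffeomorphism and $\sup_{x\in B}\|f'(x)^{-1}\|<+\infty$ for every set $B$ closed and bounded in $D$; (b) for every set $B$ closed and bounded in $D$ and every $x\in B$, the connected components of $f^{-1}([f(x_0);f(x)])\cap B$ are compact, where $[f(x_0);f(x)]\subseteq Y$ is the line segment from $f(x_0)$ to $f(x)$; (c) for every set $B$ closed and bounded in $D$ and every $x\in B$, if $\Phi(x,t)\in B$ for all $t>0$ with $(x,t)\in D_\Phi$, then the trajectory through $x$ is global in the future. Then (a-1) implies (b), (a-2) implies (b), and (b) implies (c). Moreover, if $X$ is finite dimensional then (a-1), (b) and (c) hold, and (a-2) holds as well whenever $f$ is a local $C^1$ diffeomorphism.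
   Context: Standing setting: $X,Y$ are real Banach spaces, $D\subseteq X$ is a nonempty open connected set, $f:D\to Y$ is a local homeomorphism (every point has an open neighbourhood mapped homeomorphically onto an open set), $x_0\in D$, $y_0=f(x_0)$. A flow in $D$ is a map $\Phi:D_\Phi\to D$ such that: (i) $D_\Phi$ is an open subset of $D\times\mathbb R$ and $\Phi$ is continuous; (ii) for each $x\in D$, $\{t:(x,t)\in D_\Phi\}$ is an interval containing $0$; (iii) $\Phi(x,0)=x$; (iv) if $(x,t_1),(x,t_1+t_2)\in D_\Phi$ then $(\Phi(x,t_1),t_2)\in D_\Phi$ and $\Phi(\Phi(x,t_1),t_2)=\Phi(x,t_1+t_2)$. The trajectory through $x$ is global in the future if $\{x\}\times[0,+\infty)\subseteq D_\Phi$. Let $\Psi(y,t)=y_0+e^{-t}(y-y_0)$ for $y\in Y,t\in\mathbb R$. The auxiliary flow $\Phi$ is the unique flow in $D$ of maximal domain with $f(\Phi(x,t))=\Psi(f(x),t)$ for all $(x,t)\in D_\Phi$; for each $x$, $t\mapsto\Phi(x,t)$ is the maximal continuous lifting by $f$ of $t\mapsto\Psi(f(x),t)$ through $x$ at $t=0$. A set $B\subseteq D$ is bounded in $D$ if it is bounded in $X$ and its closure in $X$ is contained in $D$. A map is proper if inverse images of compact sets are compact. $f$ is a local $C^1$ diffeomorphism if it is $C^1$ and each point has an open neighbourhood mapped homeomorphically onto an open set with $C^1$ inverse. *)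

theory Defs
  imports "HOL-Analysis.Analysis"
begin

definition local_homeo :: "'a::topological_space set \<Rightarrow> ('a \<Rightarrow> 'b::topological_space) \<Rightarrow> bool" where
  "local_homeo D f \<longleftrightarrow>
     (\<forall>x\<in>D. \<exists>U. x \<in> U \<and> open U \<and> U \<subseteq> D \<and> open (f ` U) \<and>
                 (\<exists>g. homeomorphism U (f ` U) f g))"

definition C1_on :: "'a::real_normed_vector set \<Rightarrow> ('a \<Rightarrow> 'b::real_normed_vector) \<Rightarrow> bool" where
  "C1_on S f \<longleftrightarrow>
     (\<exists>f' :: 'a \<Rightarrow> ('a \<Rightarrow>\<^sub>L 'b). (\<forall>x\<in>S. (f has_derivative blinfun_apply (f' x)) (at x))
                               \<and> continuous_on S f')"

definition local_C1_diffeo :: "'a::real_normed_vector set \<Rightarrow> ('a \<Rightarrow> 'b::real_normed_vector) \<Rightarrow> bool" where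
  "local_C1_diffeo D f \<longleftrightarrow> C1_on D f \<and>
     (\<forall>x\<in>D. \<exists>U. x \<in> U \<and> open U \<and> U \<subseteq> D \<and> open (f ` U) \<and>
                 (\<exists>g. homeomorphism U (f ` U) f g \<and> C1_on (f ` U) g))"

definition bounded_in :: "'a::real_normed_vector set \<Rightarrow> 'a set \<Rightarrow> bool" where
  "bounded_in D B \<longleftrightarrow> bounded B \<and> closure B \<subseteq> D"

definition proper_on :: "'a::topological_space set \<Rightarrow> ('a \<Rightarrow> 'b::topological_space) \<Rightarrow> bool" where
  "proper_on B f \<longleftrightarrow> (\<forall>K. compact K \<longrightarrow> compact {x\<in>B. f x \<in> K})"

definition Psi :: "'b::real_normed_vector \<Rightarrow> 'b \<Rightarrow> real \<Rightarrow> 'b" where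
  "Psi y0 y t = y0 + exp (- t) *\<^sub>R (y - y0)"

definition is_lift :: "'a::real_normed_vector set \<Rightarrow> ('a \<Rightarrow> 'b::real_normed_vector) \<Rightarrow> 'b \<Rightarrow> 'a
     \<Rightarrow> real set \<Rightarrow> (real \<Rightarrow> 'a) \<Rightarrow> bool" where
  "is_lift D f y0 x J \<gamma> \<longleftrightarrow> is_interval J \<and> 0 \<in> J \<and> continuous_on J \<gamma> \<and> \<gamma> ` J \<subseteq> D \<and>
      \<gamma> 0 = x \<and> (\<forall>t\<in>J. f (\<gamma> t) = Psi y0 (f x) t)"

text \<open>Time domain {t. (x,t) in D_Phi} of the maximal lifting (auxiliary flow).\<close>
definition aux_dom :: "'a::real_normed_vector set \<Rightarrow> ('a \<Rightarrow> 'b::real_normed_vector) \<Rightarrow> 'b \<Rightarrow> 'a \<Rightarrow> real set" where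
  "aux_dom D f y0 x = \<Union>{J. \<exists>\<gamma>. is_lift D f y0 x J \<gamma>}"

text \<open>Auxiliary flow Phi(x,t): value at t of the (unique) maximal lifting.\<close>
definition aux_flow :: "'a::real_normed_vector set \<Rightarrow> ('a \<Rightarrow> 'b::real_normed_vector) \<Rightarrow> 'b \<Rightarrow> 'a \<Rightarrow> real \<Rightarrow> 'a" where
  "aux_flow D f y0 x t = (SOME p. \<exists>J \<gamma>. is_lift D f y0 x J \<gamma> \<and> t \<in> J \<and> p = \<gamma> t)"

definition cond_a1 :: "'a::real_normed_vector set \<Rightarrow> ('a \<Rightarrow> 'b::real_normed_vector) \<Rightarrow> bool" where
  "cond_a1 D f \<longleftrightarrow> (\<forall>B. closed B \<and> bounded_in D B \<longrightarrow> proper_on B f)"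

definition cond_a2 :: "'a::real_normed_vector set \<Rightarrow> ('a \<Rightarrow> 'b::real_normed_vector) \<Rightarrow> bool" where
  "cond_a2 D f \<longleftrightarrow> local_C1_diffeo D f \<and>
     (\<forall>B. closed B \<and> bounded_in D B \<longrightarrow>
        bdd_above ((\<lambda>x. onorm (inv (frechet_derivative f (at x)))) ` B))"

definition cond_b :: "'a::real_normed_vector set \<Rightarrow> ('a \<Rightarrow> 'b::real_normed_vector) \<Rightarrow> 'a \<Rightarrow> bool" where
  "cond_b D f x0 \<longleftrightarrow> (\<forall>B. closed B \<and> bounded_in D B \<longrightarrow>
     (\<forall>x\<in>B. \<forall>C \<in> components {z\<in>B. f z \<in> closed_segment (f x0) (f x)}. compact C))"

definition cond_c :: "'a::real_normed_vector set \<Rightarrow> ('a \<Rightarrow> 'b::real_normed_vector) \<Rightarrow> 'a \<Rightarrow> bool" where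
  "cond_c D f x0 \<longleftrightarrow> (\<forall>B. closed B \<and> bounded_in D B \<longrightarrow>
     (\<forall>x\<in>B. (\<forall>t>0. t \<in> aux_dom D f (f x0) x \<longrightarrow> aux_flow D f (f x0) x t \<in> B)
              \<longrightarrow> {0..} \<subseteq> aux_dom D f (f x0) x))"

end

theory Submission
  imports Defs
begin

lemma span_seq_compact_aux:
  fixes T :: "'a::real_normed_vector set"
  assumes "finite T"
  shows "\<forall>x::nat\<Rightarrow>'a. (\<forall>n. x n \<in> span T) \<and> bounded (range x) \<longrightarrow>
           (\<exists>l\<in>span T. \<exists>r. strict_mono r \<and> (x \<circ> r) \<longlonglongrightarrow> l)"
  using assms
proof (induction T rule: finite_induct)
  case empty
  show ?case
  proof (intro allI impI)
    fix x :: "nat \<Rightarrow> 'a" assume "(\<forall>n. x n \<in> span {}) \<and> bounded (range x)"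
    then have "\<forall>n. x n = 0" by simp
    then show "\<exists>l\<in>span {}. \<exists>r. strict_mono r \<and> (x \<circ> r) \<longlonglongrightarrow> l"
      by (intro bexI[of _ 0] exI[of _ id]) (auto simp: strict_mono_def o_def)
  qed
next
  case (insert a T)
  have closedT: "closed (span T)"
  proof (rule closed_sequential_limits[THEN iffD2], intro allI impI)
    fix y l assume "(\<forall>n. y n \<in> span T) \<and> y \<longlonglongrightarrow> l"
    then have yT: "\<forall>n. y n \<in> span T" and yl: "y \<longlonglongrightarrow> l" by auto
    have "bounded (range y)" using yl by (simp add: convergent_imp_bounded)
    then obtain l' r where "l' \<in> span T" "strict_mono r" "(y \<circ> r) \<longlonglongrightarrow> l'"
      using insert.IH yT by blast
    moreover have "(y \<circ> r) \<longlonglongrightarrow> l" using yl \<open>strict_mono r\<close> by (rule LIMSEQ_subseq_LIMSEQ)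
    ultimately show "l \<in> span T" using LIMSEQ_unique by metis
  qed
  show ?case
  proof (cases "a \<in> span T")
    case True
    then have "span (insert a T) = span T" by (simp add: span_redundant)
    then show ?thesis using insert.IH by simp
  next
    case False
    have dpos: "infdist a (span T) > 0"
      using False closedT in_closed_iff_infdist_zero[of "span T" a] infdist_nonneg[of a "span T"]
      by (metis less_eq_real_def span_zero empty_iff)
    show ?thesis
    proof (intro allI impI)
      fix x :: "nat \<Rightarrow> 'a" assume xa: "(\<forall>n. x n \<in> span (insert a T)) \<and> bounded (range x)"
      then obtain K where K: "\<And>n. norm (x n) \<le> K" by (meson bounded_iff rangeI)
      have "\<forall>n. \<exists>c. x n - c *\<^sub>R a \<in> span T" using xa span_breakdown_eq by blast
      then obtain c where c: "\<And>n. x n - c n *\<^sub>R a \<in> span T" by metis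
      have cb: "\<bar>c n\<bar> * infdist a (span T) \<le> K" for n
      proof (cases "c n = 0")
        case True then show ?thesis using K[of n] by (simp add: order_trans[OF norm_ge_zero])
      next
        case False
        have "a - (- (x n - c n *\<^sub>R a) /\<^sub>R c n) \<in> UNIV" by simp
        have mem: "- ((x n - c n *\<^sub>R a) /\<^sub>R c n) \<in> span T"
          using c[of n] by (intro span_neg span_scale) (simp add: scaleR_conv_of_real)
        have "infdist a (span T) \<le> dist a (- ((x n - c n *\<^sub>R a) /\<^sub>R c n))"
          using mem by (rule infdist_le)
        also have "\<dots> = norm (x n) / \<bar>c n\<bar>"
        proof -
          have "a - - ((x n - c n *\<^sub>R a) /\<^sub>R c n) = x n /\<^sub>R c n"
            using False by (simp add: algebra_simps)
          then show ?thesis by (simp add: dist_norm divide_inverse mult.commute)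
        qed
        finally show ?thesis using False K[of n]
          by (simp add: field_simps mult.commute)
      qed
      then have "bounded (range c)"
        using dpos unfolding bounded_iff
        by (intro exI[of _ "K / infdist a (span T)"]) (auto simp: field_simps mult.commute)
      then obtain r1 cl where r1: "strict_mono r1" "(c \<circ> r1) \<longlonglongrightarrow> cl"
        using bounded_imp_convergent_subsequence[of c] by auto
      define t where "t n = x (r1 n) - c (r1 n) *\<^sub>R a" for n
      have tT: "\<forall>n. t n \<in> span T" using c by (simp add: t_def)
      have "convergent (\<lambda>n. c (r1 n))" using r1 by (auto simp: convergent_def o_def)
      then have "bounded (range (\<lambda>n. c (r1 n)))" using convergent_imp_bounded by (metis convergent_def)
      then obtain Kc where Kc: "\<And>n. norm (c (r1 n)) \<le> Kc" by (meson bounded_iff rangeI)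
      have "bounded (range t)" unfolding bounded_iff
      proof (intro exI[of _ "K + Kc * norm a"] ballI)
        fix z assume "z \<in> range t"
        then obtain n where z: "z = t n" by auto
        have "norm z \<le> norm (x (r1 n)) + norm (c (r1 n) *\<^sub>R a)" unfolding z t_def by (rule norm_triangle_ineq4)
        also have "\<dots> \<le> K + Kc * norm a" using K Kc by (intro add_mono) (auto intro: mult_right_mono)
        finally show "norm z \<le> K + Kc * norm a" .
      qed
      then obtain lt r2 where r2: "lt \<in> span T" "strict_mono r2" "(t \<circ> r2) \<longlonglongrightarrow> lt"
        using insert.IH tT by blast
      have "(\<lambda>n. t (r2 n) + c (r1 (r2 n)) *\<^sub>R a) \<longlonglongrightarrow> lt + cl *\<^sub>R a"
        using r2(3) LIMSEQ_subseq_LIMSEQ[OF r1(2) r2(2)]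
        by (intro tendsto_intros) (auto simp: o_def)
      then have "(x \<circ> (r1 \<circ> r2)) \<longlonglongrightarrow> lt + cl *\<^sub>R a" by (simp add: t_def o_def)
      moreover have "lt + cl *\<^sub>R a \<in> span (insert a T)"
        using r2(1) by (meson span_add span_base span_mono span_scale insertI1 subset_insertI subsetD)
      moreover have "strict_mono (r1 \<circ> r2)" using r1(1) r2(2) by (rule strict_mono_o)
      ultimately show "\<exists>l\<in>span (insert a T). \<exists>r. strict_mono r \<and> (x \<circ> r) \<longlonglongrightarrow> l" by blast
    qed
  qed
qed

lemma fin_dim_compact:
  fixes B S :: "'a::real_normed_vector set"
  assumes "finite S" "span S = UNIV" "bounded B" "closed B"
  shows "compact B"
proof -
  have "seq_compact B" unfolding seq_compact_def
  proof (intro allI impI)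
    fix x :: "nat \<Rightarrow> 'a" assume "\<forall>n. x n \<in> B"
    then have "bounded (range x)" using assms(3) by (meson bounded_subset image_subsetI)
    then obtain l r where "strict_mono r" "(x \<circ> r) \<longlonglongrightarrow> l"
      using span_seq_compact_aux[OF assms(1)] assms(2) by blast
    moreover have "l \<in> B" using closed_sequentially[OF assms(4)] \<open>\<forall>n. x n \<in> B\<close> calculation
      by (metis comp_apply)
    ultimately show "\<exists>l\<in>B. \<exists>r. strict_mono r \<and> (x \<circ> r) \<longlonglongrightarrow> l" by blast
  qed
  then show ?thesis by (simp add: compact_eq_seq_compact_metric)
qed

definition lift :: "('a::real_normed_vector \<Rightarrow> 'b::real_normed_vector) \<Rightarrow> 'a set \<Rightarrow> (real \<Rightarrow> 'b) \<Rightarrow> real set \<Rightarrow> (real \<Rightarrow> 'a) \<Rightarrow> bool" where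
  "lift f E \<sigma> J \<gamma> \<longleftrightarrow> is_interval J \<and> continuous_on J \<gamma> \<and> \<gamma> ` J \<subseteq> E \<and> (\<forall>t\<in>J. f (\<gamma> t) = \<sigma> t)"

definition locinj :: "'a::real_normed_vector set \<Rightarrow> ('a \<Rightarrow> 'b) \<Rightarrow> bool" where
  "locinj E f \<longleftrightarrow> (\<forall>x\<in>E. \<exists>U. x \<in> U \<and> open U \<and> inj_on f U)"

lemma homeo_inj: "homeomorphism U V f g \<Longrightarrow> inj_on f U"
  by (rule inj_on_inverseI[of U g]) (auto simp: homeomorphism_def)

lemma local_homeo_locinj: "local_homeo D f \<Longrightarrow> E \<subseteq> D \<Longrightarrow> locinj E f"
  unfolding local_homeo_def locinj_def
proof (intro ballI)
  fix x assume "\<forall>x\<in>D. \<exists>U. x \<in> U \<and> open U \<and> U \<subseteq> D \<and> open (f ` U) \<and> (\<exists>g. homeomorphism U (f ` U) f g)"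
    "E \<subseteq> D" "x \<in> E"
  then obtain U g where "x \<in> U" "open U" "homeomorphism U (f ` U) f g" by blast
  then show "\<exists>U. x \<in> U \<and> open U \<and> inj_on f U" using homeo_inj by blast
qed

lemma lift_unique:
  assumes li: "locinj E f"
    and l1: "lift f E \<sigma> J1 \<gamma>1" and l2: "lift f E \<sigma> J2 \<gamma>2"
    and s0: "s0 \<in> J1" "s0 \<in> J2" "\<gamma>1 s0 = \<gamma>2 s0" and t: "t \<in> J1" "t \<in> J2"
  shows "\<gamma>1 t = \<gamma>2 t"
proof -
  let ?I = "J1 \<inter> J2"
  have conn: "connected ?I" using l1 l2 unfolding lift_def
    by (intro is_interval_connected is_interval_Int) auto
  have c1: "continuous_on ?I \<gamma>1" and c2: "continuous_on ?I \<gamma>2"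
    using l1 l2 unfolding lift_def by (auto intro: continuous_on_subset)
  let ?S = "{x\<in>?I. \<gamma>1 x - \<gamma>2 x = 0}"
  have cl: "closedin (top_of_set ?I) ?S"
    by (rule continuous_closedin_preimage_constant) (intro continuous_intros c1 c2)
  have op: "openin (top_of_set ?I) ?S"
    unfolding openin_euclidean_subtopology_iff
  proof (intro conjI ballI)
    show "?S \<subseteq> ?I" by auto
    fix x assume x: "x \<in> ?S"
    then have "\<gamma>1 x \<in> E" using l1 unfolding lift_def by auto
    then obtain U where U: "\<gamma>1 x \<in> U" "open U" "inj_on f U" using li unfolding locinj_def by blast
    then obtain e where e: "e > 0" "ball (\<gamma>1 x) e \<subseteq> U" by (meson openE)
    obtain d1 where d1: "d1 > 0" "\<forall>x'\<in>?I. dist x' x < d1 \<longrightarrow> dist (\<gamma>1 x') (\<gamma>1 x) < e"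
      using c1 x e(1) unfolding continuous_on_iff by blast
    obtain d2 where d2: "d2 > 0" "\<forall>x'\<in>?I. dist x' x < d2 \<longrightarrow> dist (\<gamma>2 x') (\<gamma>2 x) < e"
      using c2 x e(1) unfolding continuous_on_iff by blast
    show "\<exists>e>0. \<forall>x'\<in>?I. dist x' x < e \<longrightarrow> x' \<in> ?S"
    proof (intro exI[of _ "min d1 d2"] conjI ballI impI)
      show "min d1 d2 > 0" using d1 d2 by simp
      fix x' assume x': "x' \<in> ?I" "dist x' x < min d1 d2"
      have "\<gamma>1 x' \<in> U" using d1 x' e(2) by (auto simp: dist_commute)
      moreover have "\<gamma>2 x' \<in> U" using d2 x' e(2) x by (auto simp: dist_commute)
      moreover have "f (\<gamma>1 x') = f (\<gamma>2 x')" using l1 l2 x' unfolding lift_def by auto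
      ultimately show "x' \<in> ?S" using U(3) x' by (auto dest: inj_onD)
    qed
  qed
  have "?S \<noteq> {}" using s0 by auto
  then have "?S = ?I" using conn cl op unfolding connected_clopen by blast
  then show ?thesis using t by auto
qed

lemma lift_restrict: "lift f E \<sigma> J \<gamma> \<Longrightarrow> J' \<subseteq> J \<Longrightarrow> is_interval J' \<Longrightarrow> lift f E \<sigma> J' \<gamma>"
  unfolding lift_def by (auto intro: continuous_on_subset)

lemma lift_mono: "lift f E \<sigma> J \<gamma> \<Longrightarrow> E \<subseteq> E' \<Longrightarrow> lift f E' \<sigma> J \<gamma>"
  unfolding lift_def by auto

lemma lift_glue:
  assumes l1: "lift f E \<sigma> {\<alpha>..t} \<gamma>1" and l2: "lift f E \<sigma> {t..\<beta>} \<gamma>2"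
    and eq: "\<gamma>1 t = \<gamma>2 t" and le: "\<alpha> \<le> t" "t \<le> \<beta>"
  shows "lift f E \<sigma> {\<alpha>..\<beta>} (\<lambda>s. if s \<le> t then \<gamma>1 s else \<gamma>2 s)"
proof -
  let ?g = "\<lambda>s. if s \<le> t then \<gamma>1 s else \<gamma>2 s"
  have u: "{\<alpha>..\<beta>} = {\<alpha>..t} \<union> {t..\<beta>}" using le by auto
  have c1: "continuous_on {\<alpha>..t} \<gamma>1" "\<gamma>1 ` {\<alpha>..t} \<subseteq> E" "\<forall>s\<in>{\<alpha>..t}. f (\<gamma>1 s) = \<sigma> s"
    using l1 unfolding lift_def by auto
  have c2: "continuous_on {t..\<beta>} \<gamma>2" "\<gamma>2 ` {t..\<beta>} \<subseteq> E" "\<forall>s\<in>{t..\<beta>}. f (\<gamma>2 s) = \<sigma> s"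
    using l2 unfolding lift_def by auto
  have "continuous_on {\<alpha>..t} ?g"
    using c1(1) by (rule continuous_on_eq) auto
  moreover have "continuous_on {t..\<beta>} ?g"
    using c2(1) by (rule continuous_on_eq) (use eq in auto)
  ultimately have "continuous_on ({\<alpha>..t} \<union> {t..\<beta>}) ?g" by (intro continuous_on_closed_Un) auto
  then have "continuous_on {\<alpha>..\<beta>} ?g" using u by simp
  moreover have "?g ` {\<alpha>..\<beta>} \<subseteq> E"
  proof
    fix y assume "y \<in> ?g ` {\<alpha>..\<beta>}"
    then obtain s where s: "s \<in> {\<alpha>..\<beta>}" "y = ?g s" by blast
    show "y \<in> E"
    proof (cases "s \<le> t")
      case True then show ?thesis using s c1(2) by auto
    next
      case False then show ?thesis using s c2(2) by auto
    qed
  qed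
  moreover have "\<forall>s\<in>{\<alpha>..\<beta>}. f (?g s) = \<sigma> s"
  proof
    fix s assume s: "s \<in> {\<alpha>..\<beta>}"
    show "f (?g s) = \<sigma> s"
    proof (cases "s \<le> t")
      case True then show ?thesis using s c1(3) by auto
    next
      case False then show ?thesis using s c2(3) by auto
    qed
  qed
  ultimately show ?thesis unfolding lift_def by (simp add: is_interval_cc)
qed

lemma lift_local:
  assumes h: "homeomorphism U (f ` U) f g" and UE: "U \<subseteq> E"
    and cs: "continuous_on J \<sigma>" and sJ: "\<sigma> ` J \<subseteq> f ` U" and J: "is_interval J"
  shows "lift f E \<sigma> J (g \<circ> \<sigma>)"
proof -
  have cg: "continuous_on (f ` U) g" and gU: "g ` (f ` U) = U" and fg: "\<And>y. y \<in> f ` U \<Longrightarrow> f (g y) = y"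
    using h unfolding homeomorphism_def by auto
  have "continuous_on J (g \<circ> \<sigma>)"
    by (rule continuous_on_compose[OF cs]) (rule continuous_on_subset[OF cg sJ])
  moreover have "(g \<circ> \<sigma>) ` J \<subseteq> E" using gU sJ UE by (force simp: image_comp[symmetric])
  moreover have "\<forall>t\<in>J. f ((g \<circ> \<sigma>) t) = \<sigma> t" using fg sJ by auto
  ultimately show ?thesis using J unfolding lift_def by blast
qed

lemma is_lift_iff: "is_lift D f y0 x J \<gamma> \<longleftrightarrow> lift f D (Psi y0 (f x)) J \<gamma> \<and> 0 \<in> J \<and> \<gamma> 0 = x"
  unfolding is_lift_def lift_def by auto

lemma psi_cont: "continuous_on S (Psi y0 y)"
  unfolding Psi_def by (intro continuous_intros)

lemma psi_0[simp]: "Psi y0 y 0 = y"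
  unfolding Psi_def by simp

lemma psi_seg: "t \<ge> 0 \<Longrightarrow> Psi y0 y t \<in> closed_segment y0 y"
  unfolding Psi_def closed_segment_def
  by (rule CollectI, rule exI[of _ "exp (-t)"]) (auto simp: algebra_simps)

lemma lift0: "x \<in> D \<Longrightarrow> is_lift D f y0 x {0} (\<lambda>_. x)"
  unfolding is_lift_def by (auto simp: is_interval_def)

lemma dom_iff: "t \<in> aux_dom D f y0 x \<longleftrightarrow> (\<exists>J \<gamma>. is_lift D f y0 x J \<gamma> \<and> t \<in> J)"
  unfolding aux_dom_def by blast

lemma flow_eq:
  assumes li: "locinj D f" and l: "is_lift D f y0 x J \<gamma>" and t: "t \<in> J"
  shows "aux_flow D f y0 x t = \<gamma> t"
proof -
  have ex: "\<exists>p. \<exists>J \<gamma>. is_lift D f y0 x J \<gamma> \<and> t \<in> J \<and> p = \<gamma> t" using l t by blast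
  obtain J' \<gamma>' where l': "is_lift D f y0 x J' \<gamma>'" "t \<in> J'" "aux_flow D f y0 x t = \<gamma>' t"
    using someI_ex[OF ex] unfolding aux_flow_def by blast
  have L1: "lift f D (Psi y0 (f x)) J' \<gamma>'" "0 \<in> J'" "\<gamma>' 0 = x" using l'(1) by (auto simp: is_lift_iff)
  have L2: "lift f D (Psi y0 (f x)) J \<gamma>" "0 \<in> J" "\<gamma> 0 = x" using l by (auto simp: is_lift_iff)
  have "\<gamma>' t = \<gamma> t"
    by (rule lift_unique[OF li L1(1) L2(1) L1(2) L2(2) _ l'(2) t]) (simp add: L1 L2)
  then show ?thesis using l' by simp
qed

lemma dom_cc:
  assumes "t \<in> aux_dom D f y0 x" "0 \<le> t"
  shows "\<exists>\<gamma>. is_lift D f y0 x {0..t} \<gamma>"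
proof -
  obtain J \<gamma> where l: "is_lift D f y0 x J \<gamma>" "t \<in> J" using assms dom_iff by metis
  then have "{0..t} \<subseteq> J" using assms unfolding is_lift_def is_interval_1 by auto
  then have "is_lift D f y0 x {0..t} \<gamma>" using l assms unfolding is_lift_iff
    by (auto intro: lift_restrict simp: is_interval_cc)
  then show ?thesis by blast
qed

lemma dom_down:
  assumes "t \<in> aux_dom D f y0 x" "0 \<le> s" "s \<le> t"
  shows "s \<in> aux_dom D f y0 x"
  using dom_cc[OF assms(1)] assms dom_iff by fastforce

lemma extend_dom:
  assumes l: "is_lift D f y0 x {0..t'} \<gamma>" and t': "0 \<le> t'" "t' \<le> e"
    and h: "homeomorphism U (f ` U) f g" and UD: "U \<subseteq> D" and gU: "\<gamma> t' \<in> U"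
    and ps: "\<forall>s\<in>{t'..e}. Psi y0 (f x) s \<in> f ` U"
  shows "e \<in> aux_dom D f y0 x"
proof -
  have l1: "lift f D (Psi y0 (f x)) {0..t'} \<gamma>" and x0: "\<gamma> 0 = x" using l unfolding is_lift_iff by auto
  have l2: "lift f D (Psi y0 (f x)) {t'..e} (g \<circ> Psi y0 (f x))"
    using ps by (intro lift_local[OF h UD psi_cont]) (auto simp: is_interval_cc)
  have "f (\<gamma> t') = Psi y0 (f x) t'" using l1 t' unfolding lift_def by auto
  moreover have "g (f (\<gamma> t')) = \<gamma> t'" using h gU unfolding homeomorphism_def by auto
  ultimately have eq: "\<gamma> t' = (g \<circ> Psi y0 (f x)) t'" by simp
  have "lift f D (Psi y0 (f x)) {0..e} (\<lambda>s. if s \<le> t' then \<gamma> s else (g \<circ> Psi y0 (f x)) s)"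
    by (rule lift_glue[OF l1 l2 eq t'])
  then have "is_lift D f y0 x {0..e} (\<lambda>s. if s \<le> t' then \<gamma> s else (g \<circ> Psi y0 (f x)) s)"
    unfolding is_lift_iff using t' x0 by auto
  then show ?thesis using dom_iff t' by fastforce
qed

lemma lh_at:
  assumes "local_homeo D f" "p \<in> D"
  obtains U g where "p \<in> U" "open U" "U \<subseteq> D" "open (f ` U)" "homeomorphism U (f ` U) f g"
  using assms unfolding local_homeo_def by blast

lemma f_cont:
  fixes f :: "'a::real_normed_vector \<Rightarrow> 'b::real_normed_vector"
  assumes lh: "local_homeo D f" and oD: "open D"
  shows "continuous_on D f"
proof -
  have "isCont f p" if p: "p \<in> D" for p
  proof -
    obtain U g where U: "p \<in> U" "open U" "U \<subseteq> D" "open (f ` U)" "homeomorphism U (f ` U) f g" by (rule lh_at[OF lh p])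
    then have "continuous_on U f" by (simp add: homeomorphism_cont1)
    then show ?thesis using U(1,2) by (simp add: continuous_on_eq_continuous_at)
  qed
  then show ?thesis using oD by (simp add: continuous_on_eq_continuous_at)
qed

lemma b_imp_c:
  fixes f :: "'a::real_normed_vector \<Rightarrow> 'b::real_normed_vector"
  assumes lh: "local_homeo D f" and oD: "open D" and b: "cond_b D f x0"
  shows "cond_c D f x0"
  unfolding cond_c_def
proof (intro allI impI ballI)
  fix B x
  assume B: "closed B \<and> bounded_in D B" and x: "x \<in> B"
    and H: "\<forall>t>0. t \<in> aux_dom D f (f x0) x \<longrightarrow> aux_flow D f (f x0) x t \<in> B"
  have BD: "B \<subseteq> D"
    using B closure_subset unfolding bounded_in_def by blast
  have li: "locinj D f" using local_homeo_locinj[OF lh] by blast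
  have xD: "x \<in> D" using x BD by blast
  define \<psi> where "\<psi> = Psi (f x0) (f x)"
  define dom where "dom = aux_dom D f (f x0) x"
  have cpsi: "continuous_on UNIV \<psi>" unfolding \<psi>_def by (rule psi_cont)
  show "{0..} \<subseteq> aux_dom D f (f x0) x"
  proof (rule ccontr)
    assume "\<not> {0..} \<subseteq> aux_dom D f (f x0) x"
    then obtain s1 where s1: "s1 \<ge> 0" "s1 \<notin> dom" unfolding dom_def by auto
    let ?A = "dom \<inter> {0..}"
    have "is_lift D f (f x0) x {0} (\<lambda>_. x)" by (rule lift0[OF xD])
    then have "0 \<in> dom" unfolding dom_def dom_iff by blast
    then have A0: "0 \<in> ?A" by simp
    have Abd: "t \<le> s1" if t: "t \<in> ?A" for t
    proof (rule ccontr)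
      assume "\<not> t \<le> s1"
      then have "s1 \<in> dom" using dom_down[of t D f "f x0" x s1] t s1(1) unfolding dom_def by simp
      then show False using s1(2) by simp
    qed
    have bdd: "bdd_above ?A" using Abd by (rule bdd_aboveI)
    define T where "T = Sup ?A"
    have upper: "t \<le> T" if "t \<in> ?A" for t using that bdd unfolding T_def by (rule cSup_upper)
    have T0: "0 \<le> T" using upper A0 by blast
    have below: "t \<in> dom" if "0 \<le> t" "t < T" for t
    proof -
      have "t < Sup ?A" using that(2) T_def by simp
      moreover have "?A \<noteq> {}" using A0 by blast
      ultimately obtain a where "a \<in> ?A" "t < a" by (rule less_cSupE)
      then show ?thesis using that dom_down[of a D f "f x0" x t] unfolding dom_def by auto
    qed
    define K where "K = {z\<in>B. f z \<in> closed_segment (f x0) (f x)}"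
    define C where "C = connected_component_set K x"
    have xK: "x \<in> K" using x psi_seg[of 0 "f x0" "f x"] unfolding K_def by simp
    have cC: "compact C" using b B x componentsI[OF xK] unfolding cond_b_def C_def K_def by blast
    have inC: "\<gamma> ` {0..t} \<subseteq> C" if l: "is_lift D f (f x0) x {0..t} \<gamma>" and t: "0 \<le> t" for \<gamma> t
      unfolding C_def
    proof (rule connected_component_maximal)
      show "x \<in> \<gamma> ` {0..t}" using l t unfolding is_lift_def by force
      show "connected (\<gamma> ` {0..t})" using l unfolding is_lift_def
        by (intro connected_continuous_image) auto
      show "\<gamma> ` {0..t} \<subseteq> K"
      proof
        fix z assume "z \<in> \<gamma> ` {0..t}"
        then obtain s where s: "s \<in> {0..t}" "z = \<gamma> s" by blast
        have "z \<in> B"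
        proof (cases "s = 0")
          case True then show ?thesis using s l x unfolding is_lift_def by auto
        next
          case False
          then have "s > 0" using s by auto
          moreover have "s \<in> dom" using l s dom_iff unfolding dom_def by blast
          moreover have "aux_flow D f (f x0) x s = \<gamma> s" using flow_eq[OF li l s(1)] .
          ultimately show ?thesis using H s unfolding dom_def by auto
        qed
        moreover have "f z = \<psi> s" using l s unfolding is_lift_def \<psi>_def by auto
        ultimately show "z \<in> K" unfolding K_def \<psi>_def using psi_seg s by auto
      qed
    qed
    have CD: "C \<subseteq> D" using BD unfolding C_def K_def using connected_component_subset by blast
    have key: "\<exists>p\<in>D. f p = \<psi> T \<and> (\<forall>U. open U \<and> p \<in> U \<longrightarrow> (\<forall>\<delta>>0. \<exists>t'. 0 \<le> t' \<and> T - \<delta> < t' \<and> t' \<le> T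
                 \<and> (\<exists>\<gamma>. is_lift D f (f x0) x {0..t'} \<gamma> \<and> \<gamma> t' \<in> U)))"
    proof (cases "T \<in> dom")
      case True
      then obtain \<gamma> where l: "is_lift D f (f x0) x {0..T} \<gamma>" using dom_cc T0 unfolding dom_def by blast
      show ?thesis
      proof (intro bexI[of _ "\<gamma> T"] conjI allI impI)
        show "\<gamma> T \<in> D" "f (\<gamma> T) = \<psi> T" using l T0 unfolding is_lift_def \<psi>_def by auto
        fix U :: "'a set" and \<delta> :: real assume "open U \<and> \<gamma> T \<in> U" "0 < \<delta>"
        then show "\<exists>t'. 0 \<le> t' \<and> T - \<delta> < t' \<and> t' \<le> T \<and> (\<exists>\<gamma>. is_lift D f (f x0) x {0..t'} \<gamma> \<and> \<gamma> t' \<in> U)"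
          using l T0 by (intro exI[of _ T]) auto
      qed
    next
      case False
      then have Tpos: "T > 0" using T0 A0 by (cases "T = 0") auto
      define tn where "tn n = T - T / (real n + 2)" for n
      have tn: "0 \<le> tn n" "tn n < T" for n using Tpos unfolding tn_def by (auto simp: field_simps)
      have tnlim: "tn \<longlonglongrightarrow> T"
      proof -
        have "(\<lambda>n. T / (real n + 2)) \<longlonglongrightarrow> 0"
        proof -
          have "(\<lambda>n. T / (real (n + 2))) \<longlonglongrightarrow> 0"
            using LIMSEQ_ignore_initial_segment[OF lim_const_over_n[of T], of 2] by simp
          then show ?thesis by (simp add: add.commute)
        qed
        then have "(\<lambda>n. T - T / (real n + 2)) \<longlonglongrightarrow> T - 0" by (intro tendsto_intros)
        then show ?thesis unfolding tn_def by simp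
      qed
      have "\<forall>n. \<exists>\<gamma>. is_lift D f (f x0) x {0..tn n} \<gamma>"
        using below tn dom_cc unfolding dom_def by blast
      then obtain G where G: "\<And>n. is_lift D f (f x0) x {0..tn n} (G n)" by metis
      define z where "z n = G n (tn n)" for n
      have zC: "z n \<in> C" for n
      proof -
        have "G n (tn n) \<in> G n ` {0..tn n}" using tn(1)[of n] by simp
        then show ?thesis using inC[OF G tn(1)] unfolding z_def by blast
      qed
      obtain p r where p: "p \<in> C" "strict_mono r" "(z \<circ> r) \<longlonglongrightarrow> p"
        using cC zC unfolding compact_eq_seq_compact_metric seq_compact_def by metis
      have pD: "p \<in> D" using p CD by blast
      have "isCont f p" using f_cont[OF lh oD] oD pD continuous_on_eq_continuous_at by blast
      then have l1: "(\<lambda>n. f (z (r n))) \<longlonglongrightarrow> f p" using p(3) isCont_tendsto_compose[of p f] by (simp add: o_def)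
      have fz: "f (z n) = \<psi> (tn n)" for n using G[of n] tn(1)[of n] unfolding is_lift_def z_def \<psi>_def by auto
      have tr: "(\<lambda>n. tn (r n)) \<longlonglongrightarrow> T" using LIMSEQ_subseq_LIMSEQ[OF tnlim p(2)] by (simp add: o_def)
      have "isCont \<psi> T" using cpsi continuous_on_eq_continuous_at by blast
      then have "(\<lambda>n. \<psi> (tn (r n))) \<longlonglongrightarrow> \<psi> T" using tr isCont_tendsto_compose[of T \<psi>] by simp
      then have fp: "f p = \<psi> T" using l1 fz LIMSEQ_unique by fastforce
      show ?thesis
      proof (intro bexI[of _ p] conjI allI impI pD fp)
        fix U :: "'a set" and \<delta> :: real assume U: "open U \<and> p \<in> U" and d: "0 < \<delta>"
        have e1: "eventually (\<lambda>n. z (r n) \<in> U) sequentially"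
          using p(3) U topological_tendstoD by (fastforce simp: o_def)
        have e2: "eventually (\<lambda>n. T - \<delta> < tn (r n)) sequentially"
          using tr d order_tendstoD(1)[of _ T _ "T - \<delta>"] by auto
        obtain n where n: "z (r n) \<in> U" "T - \<delta> < tn (r n)"
          using eventually_happens'[OF _ eventually_conj[OF e1 e2]] by auto
        show "\<exists>t'. 0 \<le> t' \<and> T - \<delta> < t' \<and> t' \<le> T \<and> (\<exists>\<gamma>. is_lift D f (f x0) x {0..t'} \<gamma> \<and> \<gamma> t' \<in> U)"
          using n G tn less_imp_le unfolding z_def by blast
      qed
    qed
    then obtain p where pD: "p \<in> D" and fp: "f p = \<psi> T"
      and pk0: "\<forall>U. open U \<and> p \<in> U \<longrightarrow> (\<forall>\<delta>>0. \<exists>t'. 0 \<le> t' \<and> T - \<delta> < t' \<and> t' \<le> T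
                 \<and> (\<exists>\<gamma>. is_lift D f (f x0) x {0..t'} \<gamma> \<and> \<gamma> t' \<in> U))" by (elim bexE conjE)
    have pk: "\<exists>t'. 0 \<le> t' \<and> T - \<delta> < t' \<and> t' \<le> T
                 \<and> (\<exists>\<gamma>. is_lift D f (f x0) x {0..t'} \<gamma> \<and> \<gamma> t' \<in> U)" if "open U" "p \<in> U" "\<delta> > 0" for U \<delta>
      using pk0 that by simp
    obtain U g where U: "p \<in> U" "open U" "U \<subseteq> D" "open (f ` U)" "homeomorphism U (f ` U) f g"
      by (rule lh_at[OF lh pD])
    have "\<psi> T \<in> f ` U" using fp U(1) by (metis imageI)
    then obtain e where e: "e > 0" "ball (\<psi> T) e \<subseteq> f ` U" using U(4) by (meson openE)
    obtain \<delta> where d: "\<delta> > 0" "\<forall>s. dist s T < \<delta> \<longrightarrow> dist (\<psi> s) (\<psi> T) < e"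
      using cpsi e(1) unfolding continuous_on_iff by blast
    obtain t' \<gamma> where t': "0 \<le> t'" "T - \<delta> < t'" "t' \<le> T" and l: "is_lift D f (f x0) x {0..t'} \<gamma>" "\<gamma> t' \<in> U"
      using pk[OF U(2) U(1) d(1)] by blast
    have "T + \<delta>/2 \<in> aux_dom D f (f x0) x"
    proof (rule extend_dom[OF l(1) t'(1) _ U(5) U(3) l(2)])
      show "t' \<le> T + \<delta>/2" using t' d by auto
      show "\<forall>s\<in>{t'..T + \<delta> / 2}. Psi (f x0) (f x) s \<in> f ` U"
      proof
        fix s assume "s \<in> {t'..T + \<delta> / 2}"
        then have "dist s T < \<delta>" using t' d by (auto simp: dist_real_def)
        then have "dist (\<psi> s) (\<psi> T) < e" using d by blast
        then have "\<psi> s \<in> ball (\<psi> T) e" by (simp add: dist_commute)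
        then show "Psi (f x0) (f x) s \<in> f ` U" using e unfolding \<psi>_def by blast
      qed
    qed
    moreover have "0 \<le> T + \<delta>/2" using T0 d by simp
    ultimately have "T + \<delta>/2 \<in> ?A" unfolding dom_def by simp
    then have "T + \<delta>/2 \<le> T" by (rule upper)
    then show False using d(1) by simp
  qed
qed

lemma a1_imp_b:
  fixes f :: "'a::real_normed_vector \<Rightarrow> 'b::real_normed_vector"
  assumes a: "cond_a1 D f"
  shows "cond_b D f x0"
  unfolding cond_b_def
proof (intro allI impI ballI)
  fix B x C
  assume B: "closed B \<and> bounded_in D B" and x: "x \<in> B"
    and C: "C \<in> components {z \<in> B. f z \<in> closed_segment (f x0) (f x)}"
  have "compact {z \<in> B. f z \<in> closed_segment (f x0) (f x)}"
    using a B compact_segment unfolding cond_a1_def proper_on_def by blast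
  then show "compact C" using closedin_component[OF C] closedin_compact by blast
qed

lemma fd_a1:
  fixes f :: "'a::real_normed_vector \<Rightarrow> 'b::real_normed_vector" and S :: "'a set"
  assumes lh: "local_homeo D f" and oD: "open D" and fd: "finite S" "span S = UNIV"
  shows "cond_a1 D f"
  unfolding cond_a1_def proper_on_def
proof (intro allI impI)
  fix B :: "'a set" and K :: "'b set" assume B: "closed B \<and> bounded_in D B" and K: "compact K"
  have BD: "B \<subseteq> D" using B closure_subset unfolding bounded_in_def by blast
  have cB: "compact B" using fin_dim_compact[OF fd] B unfolding bounded_in_def by blast
  have "continuous_on B f" using f_cont[OF lh oD] BD continuous_on_subset by blast
  then have "closed (B \<inter> f -` K)" using B K compact_imp_closed continuous_closed_preimage by blast
  moreover have "{x \<in> B. f x \<in> K} = B \<inter> (B \<inter> f -` K)" by auto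
  ultimately show "compact {x \<in> B. f x \<in> K}" using cB compact_Int_closed by metis
qed

lemma lcd_at:
  assumes "local_C1_diffeo D f" "p \<in> D"
  obtains U g G where "p \<in> U" "open U" "U \<subseteq> D" "open (f ` U)" "homeomorphism U (f ` U) f g"
    "\<And>y. y \<in> f ` U \<Longrightarrow> (g has_derivative blinfun_apply (G y)) (at y)" "continuous_on (f ` U) G"
proof -
  obtain U g where U: "p \<in> U" "open U" "U \<subseteq> D" "open (f ` U)" "homeomorphism U (f ` U) f g" "C1_on (f ` U) g"
    using assms unfolding local_C1_diffeo_def by blast
  then obtain G where "\<forall>y\<in>f ` U. (g has_derivative blinfun_apply (G y)) (at y)" "continuous_on (f ` U) G"
    unfolding C1_on_def by blast
  then show ?thesis using that U by blast
qed

lemma lcd_f: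
  assumes "local_C1_diffeo D f"
  obtains F where "\<And>x. x \<in> D \<Longrightarrow> (f has_derivative blinfun_apply (F x)) (at x)"
  using assms unfolding local_C1_diffeo_def C1_on_def by blast

lemma lcd_lh: "local_C1_diffeo D f \<Longrightarrow> local_homeo D f"
  unfolding local_C1_diffeo_def local_homeo_def by blast

lemma inv_deriv:
  fixes f :: "'a::real_normed_vector \<Rightarrow> 'b::real_normed_vector"
  assumes df: "\<And>x. x \<in> U \<Longrightarrow> (f has_derivative blinfun_apply (F x)) (at x)"
    and h: "homeomorphism U (f ` U) f g" and oU: "open U" "open (f ` U)"
    and dg: "\<And>y. y \<in> f ` U \<Longrightarrow> (g has_derivative blinfun_apply (G y)) (at y)"
    and z: "z \<in> U"
  shows "onorm (inv (frechet_derivative f (at z))) = norm (G (f z))"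
proof -
  have fz: "f z \<in> f ` U" using z by blast
  have gfz: "g (f z) = z" using h z by (rule homeomorphism_apply1)
  have d1: "((g \<circ> f) has_derivative (blinfun_apply (G (f z)) \<circ> blinfun_apply (F z))) (at z)"
    by (rule diff_chain_at[OF df[OF z] dg[OF fz]])
  have d1': "((\<lambda>x. x) has_derivative (blinfun_apply (G (f z)) \<circ> blinfun_apply (F z))) (at z)"
    by (rule has_derivative_transform_within_open[OF d1 oU(1) z]) (simp add: homeomorphism_apply1[OF h])
  have c1: "blinfun_apply (G (f z)) \<circ> blinfun_apply (F z) = id"
    using has_derivative_unique[OF d1' has_derivative_ident] by (simp add: id_def)
  have df': "(f has_derivative blinfun_apply (F z)) (at (g (f z)))" using df[OF z] gfz by simp
  have d2: "((f \<circ> g) has_derivative (blinfun_apply (F z) \<circ> blinfun_apply (G (f z)))) (at (f z))"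
    by (rule diff_chain_at[OF dg[OF fz] df'])
  have d2': "((\<lambda>x. x) has_derivative (blinfun_apply (F z) \<circ> blinfun_apply (G (f z)))) (at (f z))"
    by (rule has_derivative_transform_within_open[OF d2 oU(2) fz]) (simp add: homeomorphism_apply2[OF h])
  have c2: "blinfun_apply (F z) \<circ> blinfun_apply (G (f z)) = id"
    using has_derivative_unique[OF d2' has_derivative_ident] by (simp add: id_def)
  have "inv (blinfun_apply (F z)) = blinfun_apply (G (f z))" by (rule inv_unique_comp[OF c2 c1])
  moreover have "frechet_derivative f (at z) = blinfun_apply (F z)"
    using frechet_derivative_at[OF df[OF z]] by simp
  ultimately show ?thesis by (simp add: norm_blinfun.rep_eq)
qed

lemma phi_cont:
  fixes f :: "'a::real_normed_vector \<Rightarrow> 'b::real_normed_vector"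
  assumes lcd: "local_C1_diffeo D f" and oD: "open D"
  shows "continuous_on D (\<lambda>x. onorm (inv (frechet_derivative f (at x))))"
proof -
  obtain F where F: "\<And>x. x \<in> D \<Longrightarrow> (f has_derivative blinfun_apply (F x)) (at x)" using lcd_f[OF lcd] by blast
  have "isCont (\<lambda>x. onorm (inv (frechet_derivative f (at x)))) p" if p: "p \<in> D" for p
  proof -
    obtain U g G where U: "p \<in> U" "open U" "U \<subseteq> D" "open (f ` U)" "homeomorphism U (f ` U) f g"
      "\<And>y. y \<in> f ` U \<Longrightarrow> (g has_derivative blinfun_apply (G y)) (at y)" "continuous_on (f ` U) G"
      using lcd_at[OF lcd p] by blast
    have eq: "onorm (inv (frechet_derivative f (at x))) = norm (G (f x))" if "x \<in> U" for x
      using F U(3) by (intro inv_deriv[OF _ U(5) U(2) U(4) U(6) that]) blast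
    have "continuous_on U (\<lambda>x. norm (G (f x)))"
    proof -
      have "continuous_on U f" using U(5) by (rule homeomorphism_cont1)
      then have "continuous_on U (G \<circ> f)" using U(7) by (rule continuous_on_compose) 
      then show ?thesis by (intro continuous_on_norm) (simp add: o_def)
    qed
    then have "continuous_on U (\<lambda>x. onorm (inv (frechet_derivative f (at x))))"
      by (rule continuous_on_eq) (simp add: eq)
    then show ?thesis using U(1,2) by (simp add: continuous_on_eq_continuous_at)
  qed
  then show ?thesis using oD by (simp add: continuous_on_eq_continuous_at)
qed

lemma fd_a2:
  fixes f :: "'a::real_normed_vector \<Rightarrow> 'b::real_normed_vector" and S :: "'a set"
  assumes lcd: "local_C1_diffeo D f" and oD: "open D" and fd: "finite S" "span S = UNIV"
  shows "cond_a2 D f"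
  unfolding cond_a2_def
proof (intro conjI lcd allI impI)
  fix B :: "'a set" assume B: "closed B \<and> bounded_in D B"
  have BD: "B \<subseteq> D" using B closure_subset unfolding bounded_in_def by blast
  have cB: "compact B" using fin_dim_compact[OF fd] B unfolding bounded_in_def by blast
  have "continuous_on B (\<lambda>x. onorm (inv (frechet_derivative f (at x))))"
    using phi_cont[OF lcd oD] BD by (rule continuous_on_subset)
  then have "compact ((\<lambda>x. onorm (inv (frechet_derivative f (at x)))) ` B)"
    using cB by (rule compact_continuous_image)
  then show "bdd_above ((\<lambda>x. onorm (inv (frechet_derivative f (at x)))) ` B)"
    by (intro bounded_imp_bdd_above compact_imp_bounded)
qed

lemma onorm_sc: "onorm (\<lambda>t::real. t *\<^sub>R G) = norm G"
  using onorm_scaleR_left[of "\<lambda>x::real. x" G] by (simp add: onorm_id[unfolded id_def] bounded_linear_ident)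

lemma lift_deriv:
  fixes f :: "'a::real_normed_vector \<Rightarrow> 'b::real_normed_vector"
  assumes lcd: "local_C1_diffeo D f" and BD: "B \<subseteq> D"
    and M: "\<And>z. z \<in> B \<Longrightarrow> onorm (inv (frechet_derivative f (at z))) \<le> M"
    and tau: "\<tau> = (\<lambda>u. y0 + u *\<^sub>R w)"
    and l: "lift f B \<tau> J \<gamma>" and s: "s \<in> J"
  shows "\<exists>G. (\<gamma> has_derivative (\<lambda>t. t *\<^sub>R G)) (at s within J) \<and> norm G \<le> M * norm w"
proof -
  have zB: "\<gamma> s \<in> B" and fz: "f (\<gamma> s) = \<tau> s" and cg: "continuous_on J \<gamma>"
    using l s unfolding lift_def by auto
  have zD: "\<gamma> s \<in> D" using zB BD by blast
  obtain F where F: "\<And>x. x \<in> D \<Longrightarrow> (f has_derivative blinfun_apply (F x)) (at x)"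
    using lcd_f[OF lcd] by blast
  obtain U g Gd where U: "\<gamma> s \<in> U" "open U" "U \<subseteq> D" "open (f ` U)" "homeomorphism U (f ` U) f g"
      "\<And>y. y \<in> f ` U \<Longrightarrow> (g has_derivative blinfun_apply (Gd y)) (at y)" "continuous_on (f ` U) Gd"
    using lcd_at[OF lcd zD] by blast
  have eqn: "onorm (inv (frechet_derivative f (at (\<gamma> s)))) = norm (Gd (f (\<gamma> s)))"
    using F U(3) by (intro inv_deriv[OF _ U(5) U(2) U(4) U(6) U(1)]) blast
  have nG: "norm (Gd (\<tau> s)) \<le> M" using M[OF zB] eqn fz by simp
  have tsU: "\<tau> s \<in> f ` U" using fz U(1) by (metis imageI)
  have dtau: "(\<tau> has_derivative (\<lambda>t. t *\<^sub>R w)) (at s)"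
    unfolding tau by (auto intro!: derivative_eq_intros)
  have dc: "((g \<circ> \<tau>) has_derivative (blinfun_apply (Gd (\<tau> s)) \<circ> (\<lambda>t. t *\<^sub>R w))) (at s)"
    by (rule diff_chain_at[OF dtau U(6)[OF tsU]])
  have lin: "blinfun_apply (Gd (\<tau> s)) \<circ> (\<lambda>t. t *\<^sub>R w) = (\<lambda>t. t *\<^sub>R blinfun_apply (Gd (\<tau> s)) w)"
    by (simp add: o_def blinfun.scaleR_right)
  have dc': "((g \<circ> \<tau>) has_derivative (\<lambda>t. t *\<^sub>R blinfun_apply (Gd (\<tau> s)) w)) (at s within J)"
    using dc lin by (simp add: has_derivative_at_withinI)
  obtain e where e: "e > 0" "ball (\<gamma> s) e \<subseteq> U" using U(1,2) by (meson openE)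
  obtain d where d: "d > 0" "\<forall>s'\<in>J. dist s' s < d \<longrightarrow> dist (\<gamma> s') (\<gamma> s) < e"
    using cg s e(1) unfolding continuous_on_iff by blast
  have "(\<gamma> has_derivative (\<lambda>t. t *\<^sub>R blinfun_apply (Gd (\<tau> s)) w)) (at s within J)"
  proof (rule has_derivative_transform_within[OF dc' d(1) s])
    fix s' assume s': "s' \<in> J" "dist s' s < d"
    then have "dist (\<gamma> s') (\<gamma> s) < e" using d by blast
    then have "\<gamma> s' \<in> U" using e(2) by (simp add: dist_commute subset_iff)
    then have "g (f (\<gamma> s')) = \<gamma> s'" using homeomorphism_apply1[OF U(5)] by blast
    moreover have "f (\<gamma> s') = \<tau> s'" using l s'(1) unfolding lift_def by auto
    ultimately show "(g \<circ> \<tau>) s' = \<gamma> s'" by simp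
  qed
  moreover have "norm (blinfun_apply (Gd (\<tau> s)) w) \<le> M * norm w"
  proof -
    have "norm (blinfun_apply (Gd (\<tau> s)) w) \<le> norm (Gd (\<tau> s)) * norm w" by (rule norm_blinfun)
    also have "\<dots> \<le> M * norm w" using nG by (simp add: mult_right_mono)
    finally show ?thesis .
  qed
  ultimately show ?thesis by blast
qed

lemma lift_lip:
  fixes f :: "'a::real_normed_vector \<Rightarrow> 'b::real_normed_vector"
  assumes lcd: "local_C1_diffeo D f" and BD: "B \<subseteq> D"
    and M: "\<And>z. z \<in> B \<Longrightarrow> onorm (inv (frechet_derivative f (at z))) \<le> M"
    and tau: "\<tau> = (\<lambda>u. y0 + u *\<^sub>R w)"
    and l: "lift f B \<tau> J \<gamma>" and s: "s \<in> J" "t \<in> J"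
  shows "norm (\<gamma> s - \<gamma> t) \<le> M * norm w * \<bar>s - t\<bar>"
proof -
  have "\<forall>s\<in>J. \<exists>G. (\<gamma> has_derivative (\<lambda>t. t *\<^sub>R G)) (at s within J) \<and> norm G \<le> M * norm w"
    using lift_deriv[OF lcd BD M tau l] by blast
  then obtain G where G: "\<And>s. s \<in> J \<Longrightarrow> (\<gamma> has_derivative (\<lambda>t. t *\<^sub>R G s)) (at s within J)"
    "\<And>s. s \<in> J \<Longrightarrow> norm (G s) \<le> M * norm w" by metis
  have cJ: "convex J" using l unfolding lift_def by (simp add: is_interval_convex_1)
  have "norm (\<gamma> s - \<gamma> t) \<le> (M * norm w) * norm (s - t)"
  proof (rule differentiable_bound[OF cJ G(1) _ s])
    fix x assume "x \<in> J" then show "onorm (\<lambda>t. t *\<^sub>R G x) \<le> M * norm w" using G(2) by (simp add: onorm_sc)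
  qed
  then show ?thesis by simp
qed

lemma lift_const0: "f q = \<tau> 0 \<Longrightarrow> q \<in> B \<Longrightarrow> lift f B \<tau> {0..0} (\<lambda>_. q)"
  unfolding lift_def by (auto simp: is_interval_def)

lemma tau_cont: "continuous_on S (\<lambda>u::real. y0 + u *\<^sub>R (w::'b::real_normed_vector))"
  by (intro continuous_intros)

lemma one_sided:
  fixes f :: "'a::banach \<Rightarrow> 'b::real_normed_vector"
  assumes lcd: "local_C1_diffeo D f" and oD: "open D" and BD: "B \<subseteq> D" and cB: "closed B"
    and M: "\<And>z. z \<in> B \<Longrightarrow> onorm (inv (frechet_derivative f (at z))) \<le> M"
    and tau: "\<tau> = (\<lambda>u. y0 + u *\<^sub>R w)"
    and q: "q \<in> B" "f q = \<tau> 0" and R: "0 \<le> R"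
  obtains \<beta> lm where "0 \<le> \<beta>" "\<beta> \<le> R" "lift f B \<tau> {0..\<beta>} lm" "lm 0 = q"
    "\<And>u \<gamma>. u \<le> R \<Longrightarrow> lift f B \<tau> {0..u} \<gamma> \<Longrightarrow> \<gamma> 0 = q \<Longrightarrow> u \<le> \<beta>"
    "\<And>\<epsilon>. \<beta> < R \<Longrightarrow> \<epsilon> > 0 \<Longrightarrow> \<exists>c \<phi>. \<beta> < c \<and> c \<le> R \<and> c < \<beta> + \<epsilon> \<and> lift f D \<tau> {0..c} \<phi>
          \<and> (\<forall>u\<in>{0..\<beta>}. \<phi> u = lm u) \<and> \<phi> c \<notin> B"
proof -
  have lh: "local_homeo D f" using lcd by (rule lcd_lh)
  have li: "locinj D f" using local_homeo_locinj[OF lh] by blast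
  have ctau: "continuous_on UNIV \<tau>" unfolding tau by (rule tau_cont)
  have U1: "\<gamma>1 t = \<gamma>2 t" if "lift f B \<tau> {0..u1} \<gamma>1" "\<gamma>1 0 = q" "lift f B \<tau> {0..u2} \<gamma>2" "\<gamma>2 0 = q"
    "t \<in> {0..u1}" "t \<in> {0..u2}" for \<gamma>1 \<gamma>2 u1 u2 t
  proof (rule lift_unique[OF li lift_mono[OF that(1) BD] lift_mono[OF that(3) BD] _ _ _ that(5,6)])
    show "0 \<in> {0..u1}" "0 \<in> {0..u2}" using that(5,6) by auto
    show "\<gamma>1 0 = \<gamma>2 0" using that(2,4) by simp
  qed
  define I where "I = {u. 0 \<le> u \<and> u \<le> R \<and> (\<exists>\<gamma>. lift f B \<tau> {0..u} \<gamma> \<and> \<gamma> 0 = q)}"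
  have l0: "lift f B \<tau> {0..0} (\<lambda>_. q)" by (rule lift_const0) (use q in auto)
  have I0: "0 \<in> I" unfolding I_def using R l0 by blast
  have Ibd: "bdd_above I"
  proof (rule bdd_aboveI)
    fix x assume "x \<in> I" then show "x \<le> R" unfolding I_def by simp
  qed
  define \<beta> where "\<beta> = Sup I"
  have upper: "u \<le> \<beta>" if "u \<in> I" for u using that Ibd unfolding \<beta>_def by (rule cSup_upper)
  have b0: "0 \<le> \<beta>" using upper[OF I0] .
  have bR: "\<beta> \<le> R" unfolding \<beta>_def
  proof (rule cSup_least)
    show "I \<noteq> {}" using I0 by blast
    fix x assume "x \<in> I" then show "x \<le> R" unfolding I_def by simp
  qed
  have down: "u' \<in> I" if uu: "u \<in> I" "0 \<le> u'" "u' \<le> u" for u u'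
  proof -
    obtain \<gamma> where g: "lift f B \<tau> {0..u} \<gamma>" "\<gamma> 0 = q" using uu(1) unfolding I_def by blast
    have "lift f B \<tau> {0..u'} \<gamma>" using uu by (intro lift_restrict[OF g(1)]) (auto simp: is_interval_cc)
    moreover have "u' \<le> R" using uu unfolding I_def by simp
    ultimately show ?thesis using uu(2) g(2) unfolding I_def by blast
  qed
  have below: "u \<in> I" if "0 \<le> u" "u < \<beta>" for u
  proof -
    have "u < Sup I" using that \<beta>_def by simp
    moreover have "I \<noteq> {}" using I0 by blast
    ultimately obtain a where "a \<in> I" "u < a" by (rule less_cSupE)
    then show ?thesis using down that by auto
  qed
  have L: "norm (\<gamma> s - \<gamma> t) \<le> (\<bar>M\<bar> * norm w + 1) * \<bar>s - t\<bar>"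
    if "lift f B \<tau> J \<gamma>" "s \<in> J" "t \<in> J" for J \<gamma> s t
  proof -
    have "norm (\<gamma> s - \<gamma> t) \<le> M * norm w * \<bar>s - t\<bar>" by (rule lift_lip[OF lcd BD M tau that])
    also have "\<dots> \<le> (\<bar>M\<bar> * norm w + 1) * \<bar>s - t\<bar>"
    proof (rule mult_right_mono)
      have "M * norm w \<le> \<bar>M\<bar> * norm w" by (rule mult_right_mono) simp_all
      then show "M * norm w \<le> \<bar>M\<bar> * norm w + 1" by simp
    qed simp
    finally show ?thesis .
  qed
  have bI: "\<beta> \<in> I"
  proof (cases "\<beta> = 0")
    case True then show ?thesis using I0 by simp
  next
    case False
    then have bpos: "\<beta> > 0" using b0 by simp
    define un where "un n = \<beta> - \<beta> / (real n + 2)" for n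
    have un: "0 \<le> un n" "un n < \<beta>" for n using bpos unfolding un_def by (auto simp: field_simps)
    have unlim: "un \<longlonglongrightarrow> \<beta>"
    proof -
      have "(\<lambda>n. \<beta> / (real (n + 2))) \<longlonglongrightarrow> 0"
        using LIMSEQ_ignore_initial_segment[OF lim_const_over_n[of \<beta>], of 2] by simp
      then have "(\<lambda>n. \<beta> / (real n + 2)) \<longlonglongrightarrow> 0" by (simp add: add.commute)
      then have "(\<lambda>n. \<beta> - \<beta> / (real n + 2)) \<longlonglongrightarrow> \<beta> - 0" by (intro tendsto_intros)
      then show ?thesis unfolding un_def by simp
    qed
    have ex: "\<forall>n. \<exists>\<gamma>. lift f B \<tau> {0..un n} \<gamma> \<and> \<gamma> 0 = q"
    proof
      fix n have "un n \<in> I" using below[OF un(1) un(2)] .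
      then show "\<exists>\<gamma>. lift f B \<tau> {0..un n} \<gamma> \<and> \<gamma> 0 = q" unfolding I_def by blast
    qed
    obtain Gm where Gm0: "\<forall>n. lift f B \<tau> {0..un n} (Gm n) \<and> Gm n 0 = q" using choice[OF ex] by blast
    have Gm: "lift f B \<tau> {0..un n} (Gm n)" "Gm n 0 = q" for n using Gm0 by auto
    define p where "p n = Gm n (un n)" for n
    define L where "L = \<bar>M\<bar> * norm w + 1"
    have Lpos: "L > 0" unfolding L_def by (simp add: add_nonneg_pos)
    have pd1: "norm (p m - p n) \<le> L * \<bar>un m - un n\<bar>" if mn: "un m \<le> un n" for m n
    proof -
      have m1: "un m \<in> {0..un n}" "un m \<in> {0..un m}" "un n \<in> {0..un n}" using mn un(1)[of m] by auto
      have "Gm m (un m) = Gm n (un m)" by (rule U1[OF Gm(1) Gm(2) Gm(1) Gm(2) m1(2) m1(1)])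
      then have "p m - p n = Gm n (un m) - Gm n (un n)" unfolding p_def by simp
      moreover have "norm (Gm n (un m) - Gm n (un n)) \<le> L * \<bar>un m - un n\<bar>"
        unfolding L_def by (rule L[OF Gm(1) m1(1) m1(3)])
      ultimately show ?thesis by simp
    qed
    have pd: "norm (p m - p n) \<le> L * \<bar>un m - un n\<bar>" for m n
    proof (cases "un m \<le> un n")
      case True then show ?thesis by (rule pd1)
    next
      case False
      then have "norm (p n - p m) \<le> L * \<bar>un n - un m\<bar>" by (intro pd1) simp
      then show ?thesis by (simp add: norm_minus_commute abs_minus_commute)
    qed
    have "Cauchy un" using unlim by (simp add: LIMSEQ_imp_Cauchy)
    have "Cauchy p"
    proof (rule CauchyI)
      fix e :: real assume e: "e > 0"
      then obtain N where N: "\<forall>m\<ge>N. \<forall>n\<ge>N. norm (un m - un n) < e / L"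
        using \<open>Cauchy un\<close> Lpos unfolding Cauchy_iff by (meson divide_pos_pos)
      show "\<exists>N. \<forall>m\<ge>N. \<forall>n\<ge>N. norm (p m - p n) < e"
      proof (intro exI allI impI)
        fix m n assume "N \<le> m" "N \<le> n"
        then have "\<bar>un m - un n\<bar> < e / L" using N by auto
        then have "L * \<bar>un m - un n\<bar> < e" using Lpos by (simp add: field_simps)
        then show "norm (p m - p n) < e" using pd[of m n] by linarith
      qed
    qed
    then obtain P where pP: "p \<longlonglongrightarrow> P" using Cauchy_convergent_iff convergent_def by blast
    have pB: "p n \<in> B" for n using Gm(1)[of n] un(1)[of n] unfolding lift_def p_def by auto
    have PB: "P \<in> B" using closed_sequentially[OF cB] pB pP by blast
    have PD: "P \<in> D" using PB BD by blast
    have "isCont f P" using f_cont[OF lh oD] oD PD continuous_on_eq_continuous_at by blast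
    then have l1: "(\<lambda>n. f (p n)) \<longlonglongrightarrow> f P" using pP isCont_tendsto_compose[of P f] by simp
    have fp: "f (p n) = \<tau> (un n)" for n using Gm(1)[of n] un(1)[of n] unfolding lift_def p_def by auto
    have "isCont \<tau> \<beta>" using ctau continuous_on_eq_continuous_at by blast
    then have "(\<lambda>n. \<tau> (un n)) \<longlonglongrightarrow> \<tau> \<beta>" using unlim isCont_tendsto_compose[of \<beta> \<tau>] by simp
    then have fP: "f P = \<tau> \<beta>" using l1 fp LIMSEQ_unique by fastforce
    obtain U g where U: "P \<in> U" "open U" "U \<subseteq> D" "open (f ` U)" "homeomorphism U (f ` U) f g"
      by (rule lh_at[OF lh PD])
    have "\<tau> \<beta> \<in> f ` U" using fP U(1) by (metis imageI)
    then obtain e where e: "e > 0" "ball (\<tau> \<beta>) e \<subseteq> f ` U" using U(4) by (meson openE)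
    obtain \<delta> where d: "\<delta> > 0" "\<forall>s. dist s \<beta> < \<delta> \<longrightarrow> dist (\<tau> s) (\<tau> \<beta>) < e"
      using ctau e(1) unfolding continuous_on_iff by blast
    have tU: "\<tau> s \<in> f ` U" if "dist s \<beta> < \<delta>" for s
    proof -
      have "dist (\<tau> s) (\<tau> \<beta>) < e" using d that by blast
      then show ?thesis using e(2) by (simp add: dist_commute subset_iff)
    qed
    have e1: "eventually (\<lambda>n. p n \<in> U) sequentially"
      using pP U(1,2) topological_tendstoD by fastforce
    have e2: "eventually (\<lambda>n. \<beta> - \<delta> < un n) sequentially"
      using unlim d(1) order_tendstoD(1)[of _ \<beta> _ "\<beta> - \<delta>"] by auto
    obtain n where n: "p n \<in> U" "\<beta> - \<delta> < un n"
      using eventually_happens'[OF _ eventually_conj[OF e1 e2]] by auto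
    have l2: "lift f D \<tau> {un n..\<beta>} (g \<circ> \<tau>)"
    proof (rule lift_local[OF U(5) U(3) ctau[THEN continuous_on_subset]])
      show "\<tau> ` {un n..\<beta>} \<subseteq> f ` U"
      proof
        fix y assume "y \<in> \<tau> ` {un n..\<beta>}"
        then obtain s where s: "s \<in> {un n..\<beta>}" "y = \<tau> s" by blast
        then have "dist s \<beta> < \<delta>" using n(2) d(1) by (auto simp: dist_real_def)
        then show "y \<in> f ` U" using tU s by blast
      qed
    qed (auto simp: is_interval_cc)
    have gpn: "g (\<tau> (un n)) = p n"
      using homeomorphism_apply1[OF U(5) n(1)] fp[of n] by simp
    have eq: "Gm n (un n) = (g \<circ> \<tau>) (un n)" using gpn unfolding p_def by simp
    define ext where "ext = (\<lambda>s. if s \<le> un n then Gm n s else (g \<circ> \<tau>) s)"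
    have lD: "lift f D \<tau> {0..\<beta>} ext"
      unfolding ext_def using lift_glue[OF lift_mono[OF Gm(1) BD] l2 eq un(1) less_imp_le[OF un(2)]] .
    have inB: "ext s \<in> B" if s: "s \<in> {0..\<beta>}" for s
    proof (cases "s \<le> un n")
      case True
      then show ?thesis using Gm(1)[of n] s unfolding lift_def ext_def by auto
    next
      case False
      show ?thesis
      proof (cases "s = \<beta>")
        case True
        have "g (\<tau> \<beta>) = P" using homeomorphism_apply1[OF U(5) U(1)] fP by simp
        then show ?thesis using True False PB unfolding ext_def by simp
      next
        case sb: False
        then have "s < \<beta>" using s by simp
        then have "s \<in> I" using below s by simp
        then obtain \<gamma>' where g': "lift f B \<tau> {0..s} \<gamma>'" "\<gamma>' 0 = q" unfolding I_def by blast
        have mem: "un n \<in> {0..s}" "un n \<in> {0..un n}" using False un(1)[of n] by auto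
        have a1: "\<gamma>' (un n) = Gm n (un n)" by (rule U1[OF g' Gm(1) Gm(2) mem])
        have iv: "is_interval {un n..s}" by (simp add: is_interval_cc)
        have sub1: "{un n..s} \<subseteq> {0..s}" using un(1)[of n] by auto
        have sub2: "{un n..s} \<subseteq> {un n..\<beta>}" using s by auto
        have r1: "lift f D \<tau> {un n..s} \<gamma>'" by (rule lift_restrict[OF lift_mono[OF g'(1) BD] sub1 iv])
        have r2: "lift f D \<tau> {un n..s} (g \<circ> \<tau>)" by (rule lift_restrict[OF l2 sub2 iv])
        have m2: "un n \<in> {un n..s}" "s \<in> {un n..s}" using False by auto
        have e0: "\<gamma>' (un n) = (g \<circ> \<tau>) (un n)" using a1 eq by simp
        have "\<gamma>' s = (g \<circ> \<tau>) s" by (rule lift_unique[OF li r1 r2 m2(1) m2(1) e0 m2(2) m2(2)])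
        moreover have "\<gamma>' s \<in> B" using g'(1) s unfolding lift_def by auto
        ultimately show ?thesis using False unfolding ext_def by simp
      qed
    qed
    have "lift f B \<tau> {0..\<beta>} ext" using lD inB unfolding lift_def by auto
    moreover have "ext 0 = q" unfolding ext_def using Gm(2)[of n] un(1)[of n] by simp
    ultimately show ?thesis unfolding I_def using b0 bR by blast
  qed
  then obtain lm where lam: "lift f B \<tau> {0..\<beta>} lm" "lm 0 = q" unfolding I_def by blast
  show ?thesis
  proof (rule that[OF b0 bR lam])
    fix u \<gamma> assume u: "u \<le> R" "lift f B \<tau> {0..u} \<gamma>" "\<gamma> 0 = q"
    show "u \<le> \<beta>"
    proof (cases "0 \<le> u")
      case True then have "u \<in> I" using u unfolding I_def by blast
      then show ?thesis by (rule upper)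
    next
      case False then show ?thesis using b0 by simp
    qed
  next
    fix \<epsilon> :: real assume bR': "\<beta> < R" and ep: "\<epsilon> > 0"
    have lB: "lm \<beta> \<in> B" and flb: "f (lm \<beta>) = \<tau> \<beta>" using lam b0 unfolding lift_def by auto
    have lD: "lm \<beta> \<in> D" using lB BD by blast
    obtain U g where U: "lm \<beta> \<in> U" "open U" "U \<subseteq> D" "open (f ` U)" "homeomorphism U (f ` U) f g"
      by (rule lh_at[OF lh lD])
    have "\<tau> \<beta> \<in> f ` U" using flb U(1) by (metis imageI)
    then obtain e where e: "e > 0" "ball (\<tau> \<beta>) e \<subseteq> f ` U" using U(4) by (meson openE)
    obtain \<delta> where d: "\<delta> > 0" "\<forall>s. dist s \<beta> < \<delta> \<longrightarrow> dist (\<tau> s) (\<tau> \<beta>) < e"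
      using ctau e(1) unfolding continuous_on_iff by blast
    define e' where "e' = min (min (\<delta>/2) (\<epsilon>/2)) (R - \<beta>)"
    have e': "e' > 0" "e' \<le> \<delta>/2" "e' \<le> \<epsilon>/2" "e' \<le> R - \<beta>" using d(1) ep bR' unfolding e'_def by (auto simp: min_def)
    have l2: "lift f D \<tau> {\<beta>..\<beta>+e'} (g \<circ> \<tau>)"
    proof (rule lift_local[OF U(5) U(3) ctau[THEN continuous_on_subset]])
      show "\<tau> ` {\<beta>..\<beta>+e'} \<subseteq> f ` U"
      proof
        fix y assume "y \<in> \<tau> ` {\<beta>..\<beta>+e'}"
        then obtain s where s: "s \<in> {\<beta>..\<beta>+e'}" "y = \<tau> s" by blast
        then have "dist s \<beta> < \<delta>" using e' d(1) by (auto simp: dist_real_def)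
        then have "dist (\<tau> s) (\<tau> \<beta>) < e" using d by blast
        then show "y \<in> f ` U" using e(2) s by (simp add: dist_commute subset_iff)
      qed
    qed (auto simp: is_interval_cc)
    have eq: "lm \<beta> = (g \<circ> \<tau>) \<beta>" using homeomorphism_apply1[OF U(5) U(1)] flb by simp
    define \<phi> where "\<phi> = (\<lambda>s. if s \<le> \<beta> then lm s else (g \<circ> \<tau>) s)"
    have lphi: "lift f D \<tau> {0..\<beta>+e'} \<phi>"
      unfolding \<phi>_def using lift_glue[OF lift_mono[OF lam(1) BD] l2 eq b0] e'(1) by simp
    have "\<exists>c\<in>{\<beta><..\<beta>+e'}. \<phi> c \<notin> B"
    proof (rule ccontr)
      assume "\<not> ?thesis"
      then have allB: "\<phi> c \<in> B" if "c \<in> {\<beta><..\<beta>+e'}" for c using that by blast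
      have "\<phi> s \<in> B" if "s \<in> {0..\<beta>+e'}" for s
      proof (cases "s \<le> \<beta>")
        case True then show ?thesis using lam(1) that unfolding lift_def \<phi>_def by auto
      next
        case False then show ?thesis using allB that by auto
      qed
      then have "lift f B \<tau> {0..\<beta>+e'} \<phi>" using lphi unfolding lift_def by auto
      moreover have "\<phi> 0 = q" using lam(2) b0 unfolding \<phi>_def by simp
      ultimately have "\<beta> + e' \<in> I" using b0 e' unfolding I_def by auto
      then have "\<beta> + e' \<le> \<beta>" by (rule upper)
      then show False using e'(1) by simp
    qed
    then obtain c where c: "\<beta> < c" "c \<le> \<beta> + e'" "\<phi> c \<notin> B" by auto
    have "lift f D \<tau> {0..c} \<phi>" using c b0 by (intro lift_restrict[OF lphi]) (auto simp: is_interval_cc)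
    moreover have "\<forall>u\<in>{0..\<beta>}. \<phi> u = lm u" unfolding \<phi>_def by simp
    moreover have "c \<le> R" "c < \<beta> + \<epsilon>" using c e' ep by auto
    ultimately show "\<exists>c \<phi>. \<beta> < c \<and> c \<le> R \<and> c < \<beta> + \<epsilon> \<and> lift f D \<tau> {0..c} \<phi>
          \<and> (\<forall>u\<in>{0..\<beta>}. \<phi> u = lm u) \<and> \<phi> c \<notin> B" using c by blast
  qed
qed

lemma tube:
  fixes f :: "'a::real_normed_vector \<Rightarrow> 'b::real_normed_vector" and h :: "'a \<Rightarrow> real"
  assumes li: "locinj D f" and oD: "open D" and ch: "continuous_on D h"
    and l: "lift f D \<sigma> {\<alpha>..\<beta>} \<Phi>" and hP: "\<And>s. s \<in> {\<alpha>..\<beta>} \<Longrightarrow> h (\<Phi> s) = s"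
  shows "\<exists>Ob. open Ob \<and> Ob \<subseteq> D \<and> \<Phi> ` {\<alpha>..\<beta>} \<subseteq> Ob \<and> (\<forall>z\<in>Ob. f z = \<sigma> (h z) \<and> h z \<in> {\<alpha>..\<beta>} \<longrightarrow> z = \<Phi> (h z))"
proof -
  have cP: "continuous_on {\<alpha>..\<beta>} \<Phi>" and PD: "\<Phi> ` {\<alpha>..\<beta>} \<subseteq> D" and fP: "\<And>s. s \<in> {\<alpha>..\<beta>} \<Longrightarrow> f (\<Phi> s) = \<sigma> s"
    using l unfolding lift_def by auto
  have "\<forall>s\<in>{\<alpha>..\<beta>}. \<exists>Vr. open (fst Vr) \<and> inj_on f (fst Vr) \<and> \<Phi> s \<in> fst Vr \<and> snd Vr > (0::real) \<and>
          (\<forall>s'\<in>{\<alpha>..\<beta>}. dist s' s < snd Vr \<longrightarrow> \<Phi> s' \<in> fst Vr)"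
  proof
    fix s assume s: "s \<in> {\<alpha>..\<beta>}"
    then have "\<Phi> s \<in> D" using PD by blast
    then obtain V where V: "\<Phi> s \<in> V" "open V" "inj_on f V" using li unfolding locinj_def by blast
    then obtain e where e: "e > 0" "ball (\<Phi> s) e \<subseteq> V" by (meson openE)
    obtain d where d: "d > 0" "\<forall>s'\<in>{\<alpha>..\<beta>}. dist s' s < d \<longrightarrow> dist (\<Phi> s') (\<Phi> s) < e"
      using cP s e(1) unfolding continuous_on_iff by blast
    have "\<forall>s'\<in>{\<alpha>..\<beta>}. dist s' s < d \<longrightarrow> \<Phi> s' \<in> V"
    proof (intro ballI impI)
      fix s' assume "s' \<in> {\<alpha>..\<beta>}" "dist s' s < d"
      then have "dist (\<Phi> s') (\<Phi> s) < e" using d by blast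
      then show "\<Phi> s' \<in> V" using e(2) by (simp add: dist_commute subset_iff)
    qed
    then show "\<exists>Vr. open (fst Vr) \<and> inj_on f (fst Vr) \<and> \<Phi> s \<in> fst Vr \<and> snd Vr > (0::real) \<and>
          (\<forall>s'\<in>{\<alpha>..\<beta>}. dist s' s < snd Vr \<longrightarrow> \<Phi> s' \<in> fst Vr)"
      using V d(1) by (intro exI[of _ "(V, d)"]) auto
  qed
  then obtain Vr where Vr: "\<And>s. s \<in> {\<alpha>..\<beta>} \<Longrightarrow> open (fst (Vr s)) \<and> inj_on f (fst (Vr s)) \<and> \<Phi> s \<in> fst (Vr s) \<and> snd (Vr s) > (0::real) \<and>
          (\<forall>s'\<in>{\<alpha>..\<beta>}. dist s' s < snd (Vr s) \<longrightarrow> \<Phi> s' \<in> fst (Vr s))"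
    using bchoice[of "{\<alpha>..\<beta>}"] by metis
  define Ob where "Ob = (\<Union>s\<in>{\<alpha>..\<beta>}. fst (Vr s) \<inter> (h -` ball s (snd (Vr s)) \<inter> D))"
  have "open Ob" unfolding Ob_def
  proof (rule open_UN, rule ballI, rule open_Int)
    fix s assume s: "s \<in> {\<alpha>..\<beta>}"
    show "open (fst (Vr s))" using Vr[OF s] by blast
    show "open (h -` ball s (snd (Vr s)) \<inter> D)" using ch oD continuous_on_open_vimage by blast
  qed
  moreover have "Ob \<subseteq> D" unfolding Ob_def by blast
  moreover have "\<Phi> ` {\<alpha>..\<beta>} \<subseteq> Ob"
  proof
    fix z assume "z \<in> \<Phi> ` {\<alpha>..\<beta>}"
    then obtain s where s: "s \<in> {\<alpha>..\<beta>}" "z = \<Phi> s" by blast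
    have "h z = s" using hP s by simp
    then have "z \<in> h -` ball s (snd (Vr s))" using Vr[OF s(1)] by simp
    moreover have "z \<in> fst (Vr s)" "z \<in> D" using Vr[OF s(1)] s PD by auto
    ultimately show "z \<in> Ob" unfolding Ob_def using s(1) by blast
  qed
  moreover have "\<forall>z\<in>Ob. f z = \<sigma> (h z) \<and> h z \<in> {\<alpha>..\<beta>} \<longrightarrow> z = \<Phi> (h z)"
  proof (intro ballI impI)
    fix z assume z: "z \<in> Ob" "f z = \<sigma> (h z) \<and> h z \<in> {\<alpha>..\<beta>}"
    then obtain s where s: "s \<in> {\<alpha>..\<beta>}" "z \<in> fst (Vr s)" "dist (h z) s < snd (Vr s)"
      unfolding Ob_def by (auto simp: dist_commute)
    have "\<Phi> (h z) \<in> fst (Vr s)" using Vr[OF s(1)] z(2) s(3) by blast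
    moreover have "f (\<Phi> (h z)) = f z" using fP z(2) by simp
    ultimately show "z = \<Phi> (h z)" using Vr[OF s(1)] s(2) by (metis inj_onD)
  qed
  ultimately show ?thesis by blast
qed

lemma lift_shift_p:
  assumes l: "lift f E (\<lambda>u. y0 + sq *\<^sub>R v + u *\<^sub>R v) {0..c} \<phi>"
  shows "lift f E (\<lambda>s. y0 + s *\<^sub>R v) {sq..sq+c} (\<lambda>s. \<phi> (s - sq))"
proof -
  have c: "continuous_on {0..c} \<phi>" and im: "\<phi> ` {0..c} \<subseteq> E"
    and fe: "\<And>u. u \<in> {0..c} \<Longrightarrow> f (\<phi> u) = y0 + sq *\<^sub>R v + u *\<^sub>R v" using l unfolding lift_def by auto
  have sub: "(\<lambda>s. s - sq) ` {sq..sq+c} \<subseteq> {0..c}" by auto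
  have "continuous_on {sq..sq+c} (\<phi> \<circ> (\<lambda>s. s - sq))"
    by (rule continuous_on_compose[OF _ continuous_on_subset[OF c sub]]) (intro continuous_intros)
  then have "continuous_on {sq..sq+c} (\<lambda>s. \<phi> (s - sq))" by (simp add: o_def)
  moreover have "(\<lambda>s. \<phi> (s - sq)) ` {sq..sq+c} \<subseteq> E" using im sub by force
  moreover have "f (\<phi> (s - sq)) = y0 + s *\<^sub>R v" if "s \<in> {sq..sq+c}" for s
  proof -
    have "f (\<phi> (s - sq)) = y0 + sq *\<^sub>R v + (s - sq) *\<^sub>R v" using fe that by auto
    also have "\<dots> = y0 + s *\<^sub>R v" by (simp add: algebra_simps)
    finally show ?thesis .
  qed
  ultimately show ?thesis unfolding lift_def by (auto simp: is_interval_cc)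
qed

lemma lift_shift_m:
  assumes l: "lift f E (\<lambda>u. y0 + sq *\<^sub>R v + u *\<^sub>R (- v)) {0..c} \<phi>"
  shows "lift f E (\<lambda>s. y0 + s *\<^sub>R v) {sq-c..sq} (\<lambda>s. \<phi> (sq - s))"
proof -
  have c: "continuous_on {0..c} \<phi>" and im: "\<phi> ` {0..c} \<subseteq> E"
    and fe: "\<And>u. u \<in> {0..c} \<Longrightarrow> f (\<phi> u) = y0 + sq *\<^sub>R v + u *\<^sub>R (- v)" using l unfolding lift_def by auto
  have sub: "(\<lambda>s. sq - s) ` {sq-c..sq} \<subseteq> {0..c}" by auto
  have "continuous_on {sq-c..sq} (\<phi> \<circ> (\<lambda>s. sq - s))"
    by (rule continuous_on_compose[OF _ continuous_on_subset[OF c sub]]) (intro continuous_intros)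
  then have "continuous_on {sq-c..sq} (\<lambda>s. \<phi> (sq - s))" by (simp add: o_def)
  moreover have "(\<lambda>s. \<phi> (sq - s)) ` {sq-c..sq} \<subseteq> E" using im sub by force
  moreover have "f (\<phi> (sq - s)) = y0 + s *\<^sub>R v" if "s \<in> {sq-c..sq}" for s
  proof -
    have "f (\<phi> (sq - s)) = y0 + sq *\<^sub>R v + (sq - s) *\<^sub>R (- v)" using fe that by auto
    also have "\<dots> = y0 + s *\<^sub>R v" by (simp add: algebra_simps)
    finally show ?thesis .
  qed
  ultimately show ?thesis unfolding lift_def by (auto simp: is_interval_cc)
qed

lemma comp_singleton:
  fixes f :: "'a::real_normed_vector \<Rightarrow> 'b::real_normed_vector"
  assumes li: "locinj D f" and C: "C = connected_component_set K q" and qK: "q \<in> K" and KD: "K \<subseteq> D"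
    and fc: "\<And>z. z \<in> K \<Longrightarrow> f z = y"
  shows "C \<subseteq> {q}"
proof -
  have qD: "q \<in> D" using qK KD by blast
  obtain U where U: "q \<in> U" "open U" "inj_on f U" using li qD unfolding locinj_def by blast
  have CK: "C \<subseteq> K" using C connected_component_subset by blast
  have qC: "q \<in> C" using C qK by simp
  have cC: "connected C" using C by simp
  have "C \<inter> U \<inter> - {q} = {}"
  proof -
    have "z = q" if "z \<in> C" "z \<in> U" for z
    proof -
      have "f z = f q" using fc CK that qK by auto
      then show ?thesis using U(3) that(2) U(1) by (meson inj_onD)
    qed
    then show ?thesis by blast
  qed
  moreover have "C \<subseteq> U \<union> - {q}" using U(1) by blast
  moreover have "open (- {q})" by (simp add: open_Compl)
  ultimately have "C \<inter> U = {} \<or> C \<inter> - {q} = {}" using connectedD[OF cC U(2)] by blast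
  then show ?thesis using qC U(1) by blast
qed

lemma core:
  fixes f :: "'a::banach \<Rightarrow> 'b::real_normed_vector"
  assumes lcd: "local_C1_diffeo D f" and oD: "open D" and BD: "B \<subseteq> D" and cB: "closed B"
    and M: "\<And>z. z \<in> B \<Longrightarrow> onorm (inv (frechet_derivative f (at z))) \<le> M"
    and v: "v \<noteq> 0"
    and Kdef: "K = {z\<in>B. f z \<in> closed_segment y0 (y0 + v)}"
    and qK: "q \<in> K"
  shows "\<exists>\<Gamma>. compact \<Gamma> \<and> connected_component_set K q \<subseteq> \<Gamma>"
proof -
  have lh: "local_homeo D f" using lcd by (rule lcd_lh)
  have li: "locinj D f" using local_homeo_locinj[OF lh] by blast
  define \<sigma> where "\<sigma> = (\<lambda>s::real. y0 + s *\<^sub>R v)"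
  define h where "h = (\<lambda>z. norm (f z - y0) / norm v)"
  have nv: "norm v > 0" using v by simp
  have hs: "h z = s" if "f z = \<sigma> s" "0 \<le> s" for z s
    using that nv unfolding h_def \<sigma>_def by simp
  have segK: "f z = \<sigma> (h z) \<and> 0 \<le> h z \<and> h z \<le> 1" if "z \<in> K" for z
  proof -
    have "f z \<in> closed_segment y0 (y0 + v)" using that Kdef by blast
    then obtain u where u: "0 \<le> u" "u \<le> 1" "f z = (1 - u) *\<^sub>R y0 + u *\<^sub>R (y0 + v)"
      unfolding closed_segment_def by blast
    then have fz: "f z = \<sigma> u" unfolding \<sigma>_def by (simp add: algebra_simps)
    then have "h z = u" using hs u by blast
    then show ?thesis using fz u by simp
  qed
  have inK: "z \<in> K" if "z \<in> B" "f z = \<sigma> s" "0 \<le> s" "s \<le> 1" for z s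
  proof -
    have "f z = (1 - s) *\<^sub>R y0 + s *\<^sub>R (y0 + v)" using that unfolding \<sigma>_def by (simp add: algebra_simps)
    then have "f z \<in> closed_segment y0 (y0 + v)" unfolding closed_segment_def using that by blast
    then show ?thesis using that unfolding Kdef by blast
  qed
  have KB: "K \<subseteq> B" unfolding Kdef by blast
  have ch: "continuous_on D h" unfolding h_def using f_cont[OF lh oD] v by (intro continuous_intros) auto
  define sq where "sq = h q"
  have sq: "f q = \<sigma> sq" "0 \<le> sq" "sq \<le> 1" using segK[OF qK] unfolding sq_def by auto
  have qB: "q \<in> B" using qK KB by blast
  define \<tau>p where "\<tau>p = (\<lambda>u::real. y0 + sq *\<^sub>R v + u *\<^sub>R v)"
  define \<tau>m where "\<tau>m = (\<lambda>u::real. y0 + sq *\<^sub>R v + u *\<^sub>R (- v))"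
  have fqp: "f q = \<tau>p 0" and fqm: "f q = \<tau>m 0" using sq(1) unfolding \<tau>p_def \<tau>m_def \<sigma>_def by auto
  obtain \<beta>p lp where P: "0 \<le> \<beta>p" "\<beta>p \<le> 1 - sq" "lift f B \<tau>p {0..\<beta>p} lp" "lp 0 = q"
    "\<And>u \<gamma>. u \<le> 1 - sq \<Longrightarrow> lift f B \<tau>p {0..u} \<gamma> \<Longrightarrow> \<gamma> 0 = q \<Longrightarrow> u \<le> \<beta>p"
    "\<And>\<epsilon>. \<beta>p < 1 - sq \<Longrightarrow> \<epsilon> > 0 \<Longrightarrow> \<exists>c \<phi>. \<beta>p < c \<and> c \<le> 1 - sq \<and> c < \<beta>p + \<epsilon> \<and> lift f D \<tau>p {0..c} \<phi>
          \<and> (\<forall>u\<in>{0..\<beta>p}. \<phi> u = lp u) \<and> \<phi> c \<notin> B"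
  proof -
    have R: "0 \<le> 1 - sq" using sq(3) by simp
    show ?thesis by (rule one_sided[OF lcd oD BD cB M \<tau>p_def qB fqp R]) (assumption | rule that)+
  qed
  obtain \<beta>m lm where Mm: "0 \<le> \<beta>m" "\<beta>m \<le> sq" "lift f B \<tau>m {0..\<beta>m} lm" "lm 0 = q"
    "\<And>u \<gamma>. u \<le> sq \<Longrightarrow> lift f B \<tau>m {0..u} \<gamma> \<Longrightarrow> \<gamma> 0 = q \<Longrightarrow> u \<le> \<beta>m"
    "\<And>\<epsilon>. \<beta>m < sq \<Longrightarrow> \<epsilon> > 0 \<Longrightarrow> \<exists>c \<phi>. \<beta>m < c \<and> c \<le> sq \<and> c < \<beta>m + \<epsilon> \<and> lift f D \<tau>m {0..c} \<phi>
          \<and> (\<forall>u\<in>{0..\<beta>m}. \<phi> u = lm u) \<and> \<phi> c \<notin> B"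
  proof -
    show ?thesis by (rule one_sided[OF lcd oD BD cB M \<tau>m_def qB fqm sq(2)]) (assumption | rule that)+
  qed
  define a where "a = sq - \<beta>m"
  define b where "b = sq + \<beta>p"
  define Lam where "Lam = (\<lambda>s. if s \<le> sq then lm (sq - s) else lp (s - sq))"
  have lLam: "lift f B \<sigma> {a..b} Lam"
  proof -
    have l1: "lift f B \<sigma> {sq-\<beta>m..sq} (\<lambda>s. lm (sq - s))"
      using lift_shift_m[of f B y0 sq v \<beta>m lm] Mm(3) unfolding \<tau>m_def \<sigma>_def by simp
    have l2: "lift f B \<sigma> {sq..sq+\<beta>p} (\<lambda>s. lp (s - sq))"
      using lift_shift_p[of f B y0 sq v \<beta>p lp] P(3) unfolding \<tau>p_def \<sigma>_def by simp
    have "lift f B \<sigma> {sq-\<beta>m..sq+\<beta>p} (\<lambda>s. if s \<le> sq then lm (sq - s) else lp (s - sq))"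
      by (rule lift_glue[OF l1 l2]) (use Mm(1,4) P(1,4) in auto)
    then show ?thesis unfolding Lam_def a_def b_def .
  qed
  define \<Gamma> where "\<Gamma> = Lam ` {a..b}"
  have cG: "compact \<Gamma>" unfolding \<Gamma>_def using lLam unfolding lift_def
    by (intro compact_continuous_image) auto
  have cutp: "\<exists>cp \<phi>p. \<beta>p \<le> cp \<and> cp \<le> 1 - sq \<and> lift f D \<tau>p {0..cp} \<phi>p \<and> (\<forall>u\<in>{0..\<beta>p}. \<phi>p u = lp u)
      \<and> (cp = 1 - sq \<or> \<phi>p cp \<notin> B) \<and> (d > b \<longrightarrow> sq + cp < d)" if d: "d \<le> 1" for d
  proof (cases "\<beta>p < 1 - sq")
    case True
    define \<epsilon> where "\<epsilon> = (if d > b then d - b else 1)"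
    have ep: "\<epsilon> > 0" unfolding \<epsilon>_def by auto
    obtain c \<phi> where c: "\<beta>p < c" "c \<le> 1 - sq" "c < \<beta>p + \<epsilon>" "lift f D \<tau>p {0..c} \<phi>"
      "\<forall>u\<in>{0..\<beta>p}. \<phi> u = lp u" "\<phi> c \<notin> B" using P(6)[OF True ep] by blast
    have "d > b \<longrightarrow> sq + c < d" using c(3) unfolding \<epsilon>_def b_def by auto
    then show ?thesis using c by (intro exI[of _ c] exI[of _ \<phi>]) auto
  next
    case False
    then have "\<beta>p = 1 - sq" using P(2) by simp
    then show ?thesis using P(3) d BD unfolding b_def
      by (intro exI[of _ \<beta>p] exI[of _ lp]) (auto intro: lift_mono)
  qed
  have cutm: "\<exists>cm \<phi>m. \<beta>m \<le> cm \<and> cm \<le> sq \<and> lift f D \<tau>m {0..cm} \<phi>m \<and> (\<forall>u\<in>{0..\<beta>m}. \<phi>m u = lm u)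
      \<and> (cm = sq \<or> \<phi>m cm \<notin> B) \<and> (d < a \<longrightarrow> d < sq - cm)" if d: "0 \<le> d" for d
  proof (cases "\<beta>m < sq")
    case True
    define \<epsilon> where "\<epsilon> = (if d < a then a - d else 1)"
    have ep: "\<epsilon> > 0" unfolding \<epsilon>_def by auto
    obtain c \<phi> where c: "\<beta>m < c" "c \<le> sq" "c < \<beta>m + \<epsilon>" "lift f D \<tau>m {0..c} \<phi>"
      "\<forall>u\<in>{0..\<beta>m}. \<phi> u = lm u" "\<phi> c \<notin> B" using Mm(6)[OF True ep] by blast
    have "d < a \<longrightarrow> d < sq - c" using c(3) unfolding \<epsilon>_def a_def by auto
    then show ?thesis using c by (intro exI[of _ c] exI[of _ \<phi>]) auto
  next
    case False
    then have "\<beta>m = sq" using Mm(2) by simp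
    then show ?thesis using Mm(3) d BD unfolding a_def
      by (intro exI[of _ \<beta>m] exI[of _ lm]) (auto intro: lift_mono)
  qed
  have "connected_component_set K q \<subseteq> \<Gamma>"
  proof
    fix z assume zC: "z \<in> connected_component_set K q"
    define C where "C = connected_component_set K q"
    have CK: "C \<subseteq> K" unfolding C_def using connected_component_subset by blast
    have zK: "z \<in> K" using zC CK unfolding C_def by blast
    define d where "d = h z"
    have dz: "f z = \<sigma> d" "0 \<le> d" "d \<le> 1" using segK[OF zK] unfolding d_def by auto
    obtain cp \<phi>p where cp: "\<beta>p \<le> cp" "cp \<le> 1 - sq" "lift f D \<tau>p {0..cp} \<phi>p" "\<forall>u\<in>{0..\<beta>p}. \<phi>p u = lp u"
      "cp = 1 - sq \<or> \<phi>p cp \<notin> B" "d > b \<longrightarrow> sq + cp < d" using cutp[OF dz(3)] by blast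
    obtain cm \<phi>m where cm: "\<beta>m \<le> cm" "cm \<le> sq" "lift f D \<tau>m {0..cm} \<phi>m" "\<forall>u\<in>{0..\<beta>m}. \<phi>m u = lm u"
      "cm = sq \<or> \<phi>m cm \<notin> B" "d < a \<longrightarrow> d < sq - cm" using cutm[OF dz(2)] by blast
    have p0: "\<phi>p 0 = q" using cp(4) P(1,4) by auto
    have m0: "\<phi>m 0 = q" using cm(4) Mm(1,4) by auto
    define \<Phi> where "\<Phi> = (\<lambda>s. if s \<le> sq then \<phi>m (sq - s) else \<phi>p (s - sq))"
    define \<alpha> where "\<alpha> = sq - cm"
    define \<beta> where "\<beta> = sq + cp"
    have ab: "0 \<le> \<alpha>" "\<alpha> \<le> sq" "sq \<le> \<beta>" "\<beta> \<le> 1" using cm cp P Mm unfolding \<alpha>_def \<beta>_def by auto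
    have lPhi: "lift f D \<sigma> {\<alpha>..\<beta>} \<Phi>"
    proof -
      have l1: "lift f D \<sigma> {sq-cm..sq} (\<lambda>s. \<phi>m (sq - s))"
        using lift_shift_m[of f D y0 sq v cm \<phi>m] cm(3) unfolding \<tau>m_def \<sigma>_def by simp
      have l2: "lift f D \<sigma> {sq..sq+cp} (\<lambda>s. \<phi>p (s - sq))"
        using lift_shift_p[of f D y0 sq v cp \<phi>p] cp(3) unfolding \<tau>p_def \<sigma>_def by simp
      have "lift f D \<sigma> {sq-cm..sq+cp} (\<lambda>s. if s \<le> sq then \<phi>m (sq - s) else \<phi>p (s - sq))"
        by (rule lift_glue[OF l1 l2]) (use p0 m0 cm(1) cp(1) Mm(1) P(1) in auto)
      then show ?thesis unfolding \<Phi>_def \<alpha>_def \<beta>_def .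
    qed
    have Phip: "\<Phi> (sq + u) = \<phi>p u" if "0 \<le> u" for u
    proof (cases "u = 0")
      case True then show ?thesis using p0 m0 unfolding \<Phi>_def by simp
    next
      case False then show ?thesis using that unfolding \<Phi>_def by simp
    qed
    have Phim: "\<Phi> (sq - u) = \<phi>m u" if "0 \<le> u" for u using that unfolding \<Phi>_def by simp
    have fPhi: "f (\<Phi> s) = \<sigma> s" if "s \<in> {\<alpha>..\<beta>}" for s using lPhi that unfolding lift_def by auto
    have hPhi: "h (\<Phi> s) = s" if "s \<in> {\<alpha>..\<beta>}" for s using hs[OF fPhi[OF that]] that ab by auto
    obtain Ob where Ob: "open Ob" "Ob \<subseteq> D" "\<Phi> ` {\<alpha>..\<beta>} \<subseteq> Ob"
      "\<forall>z\<in>Ob. f z = \<sigma> (h z) \<and> h z \<in> {\<alpha>..\<beta>} \<longrightarrow> z = \<Phi> (h z)"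
      using tube[OF li oD ch lPhi hPhi] by blast
    define lo where "lo = (if cm = sq then -1 else \<alpha>)"
    define hi where "hi = (if cp = 1 - sq then 2 else \<beta>)"
    define O' where "O' = Ob \<inter> (h -` {lo<..<hi} \<inter> D)"
    have oO': "open O'"
    proof -
      have "open (h -` {lo<..<hi} \<inter> D)" using ch oD continuous_on_open_vimage[of D h] by auto
      then show ?thesis unfolding O'_def by (rule open_Int[OF Ob(1)])
    qed
    define F where "F = \<Phi> ` {\<alpha>..\<beta>}"
    have cF: "closed F" unfolding F_def using lPhi unfolding lift_def
      by (intro compact_imp_closed compact_continuous_image) auto
    have KO: "z' \<in> F" if "z' \<in> K" "z' \<in> O'" for z'
    proof -
      have s: "f z' = \<sigma> (h z')" "0 \<le> h z'" "h z' \<le> 1" using segK[OF that(1)] by auto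
      have "lo < h z'" "h z' < hi" using that(2) unfolding O'_def by auto
      then have "\<alpha> \<le> h z'" "h z' \<le> \<beta>" using s ab unfolding lo_def hi_def \<alpha>_def \<beta>_def
        by (auto split: if_splits)
      then have "z' = \<Phi> (h z')" using Ob(4) that(2) s(1) unfolding O'_def by auto
      then show ?thesis unfolding F_def using \<open>\<alpha> \<le> h z'\<close> \<open>h z' \<le> \<beta>\<close> by auto
    qed
    have KF: "z' \<in> O'" if zz: "z' \<in> K" "z' \<in> F" for z'
    proof -
      obtain s where s: "s \<in> {\<alpha>..\<beta>}" "z' = \<Phi> s" using zz(2) unfolding F_def by blast
      have z'B: "z' \<in> B" using zz(1) KB by blast
      have "z' \<in> Ob" using Ob(3) s by blast
      moreover have "z' \<in> D" using z'B BD by blast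
      moreover have hz: "h z' = s" using hPhi s by simp
      moreover have "lo < s"
      proof (cases "cm = sq")
        case True then show ?thesis using s ab unfolding lo_def by auto
      next
        case False
        then have nB: "\<phi>m cm \<notin> B" using cm(5) by simp
        have "s \<noteq> \<alpha>"
        proof
          assume "s = \<alpha>"
          then have "z' = \<phi>m cm" using s Phim[of cm] cm Mm(1) unfolding \<alpha>_def by simp
          then show False using nB z'B by simp
        qed
        then show ?thesis using s False unfolding lo_def by auto
      qed
      moreover have "s < hi"
      proof (cases "cp = 1 - sq")
        case True then show ?thesis using s ab unfolding hi_def by auto
      next
        case False
        then have nB: "\<phi>p cp \<notin> B" using cp(5) by simp
        have "s \<noteq> \<beta>"
        proof
          assume "s = \<beta>"
          then have "z' = \<phi>p cp" using s Phip[of cp] cp P(1) unfolding \<beta>_def by simp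
          then show False using nB z'B by simp
        qed
        then show ?thesis using s False unfolding hi_def by auto
      qed
      ultimately show ?thesis unfolding O'_def by auto
    qed
    have qF: "q \<in> F"
    proof -
      have "\<Phi> sq = q" using Phim[of 0] m0 by simp
      then show ?thesis unfolding F_def using ab by force
    qed
    have qO: "q \<in> O'" using KF[OF qK qF] .
    have cC: "connected C" unfolding C_def by simp
    have qC: "q \<in> C" unfolding C_def using qK by simp
    have "C \<inter> O' \<inter> - F = {}" using KO CK by blast
    moreover have "C \<subseteq> O' \<union> - F" using KF CK by blast
    moreover have "open (- F)" using cF by (simp add: open_Compl)
    ultimately have "C \<inter> O' = {} \<or> C \<inter> - F = {}" using connectedD[OF cC oO'] by blast
    then have "C \<subseteq> F" using qC qO by blast
    then have "z \<in> F" using zC unfolding C_def by blast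
    then obtain s where s: "s \<in> {\<alpha>..\<beta>}" "z = \<Phi> s" unfolding F_def by blast
    have sd: "s = d" using hPhi[OF s(1)] s(2) unfolding d_def by simp
    have "\<not> d > b" using cp(6) s sd unfolding \<beta>_def by auto
    moreover have "\<not> d < a" using cm(6) s sd unfolding \<alpha>_def by auto
    ultimately have dab: "d \<in> {a..b}" by auto
    have "z = Lam d"
    proof (cases "d \<le> sq")
      case True
      have "z = \<phi>m (sq - d)" using s sd Phim[of "sq - d"] True by simp
      also have "\<dots> = lm (sq - d)" using cm(4) dab True unfolding a_def by auto
      finally show ?thesis unfolding Lam_def using True by simp
    next
      case False
      have "z = \<phi>p (d - sq)" using s sd Phip[of "d - sq"] False by simp
      also have "\<dots> = lp (d - sq)" using cp(4) dab False unfolding b_def by auto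
      finally show ?thesis unfolding Lam_def using False by simp
    qed
    then show "z \<in> \<Gamma>" unfolding \<Gamma>_def using dab by blast
  qed
  then show ?thesis using cG by blast
qed

lemma a2_imp_b:
  fixes f :: "'a::banach \<Rightarrow> 'b::real_normed_vector"
  assumes oD: "open D" and a2: "cond_a2 D f"
  shows "cond_b D f x0"
  unfolding cond_b_def
proof (intro allI impI ballI)
  fix B x C
  assume B: "closed B \<and> bounded_in D B" and x: "x \<in> B"
    and C: "C \<in> components {z \<in> B. f z \<in> closed_segment (f x0) (f x)}"
  have lcd: "local_C1_diffeo D f" using a2 unfolding cond_a2_def by blast
  have lh: "local_homeo D f" using lcd by (rule lcd_lh)
  have li: "locinj D f" using local_homeo_locinj[OF lh] by blast
  have BD: "B \<subseteq> D" using B closure_subset unfolding bounded_in_def by blast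
  have cB: "closed B" using B by blast
  have "bdd_above ((\<lambda>x. onorm (inv (frechet_derivative f (at x)))) ` B)"
    using a2 B unfolding cond_a2_def by simp
  then obtain M where M0: "\<forall>y\<in>(\<lambda>x. onorm (inv (frechet_derivative f (at x)))) ` B. y \<le> M"
    unfolding bdd_above_def by blast
  have M: "\<And>z. z \<in> B \<Longrightarrow> onorm (inv (frechet_derivative f (at z))) \<le> M" using M0 by blast
  define K where "K = {z \<in> B. f z \<in> closed_segment (f x0) (f x)}"
  obtain q where qK: "q \<in> K" and Cq: "C = connected_component_set K q"
    using C unfolding K_def by (rule componentsE)
  have KB: "K \<subseteq> B" unfolding K_def by blast
  have "continuous_on B f" using f_cont[OF lh oD] BD by (rule continuous_on_subset)
  then have "closed (B \<inter> f -` closed_segment (f x0) (f x))"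
    using cB by (intro continuous_closed_preimage) auto
  moreover have "K = B \<inter> f -` closed_segment (f x0) (f x)" unfolding K_def by auto
  ultimately have cK: "closed K" by simp
  have cC: "closed C" using closedin_component[OF C] cK unfolding K_def[symmetric]
    by (rule closedin_closed_trans)
  have "\<exists>\<Gamma>. compact \<Gamma> \<and> C \<subseteq> \<Gamma>"
  proof (cases "f x = f x0")
    case True
    have KD: "K \<subseteq> D" using KB BD by blast
    have fc: "f z = f x0" if z: "z \<in> K" for z
    proof -
      have "f z \<in> closed_segment (f x0) (f x)" using z unfolding K_def by blast
      then have "f z \<in> closed_segment (f x0) (f x0)" using True by simp
      then show ?thesis by simp
    qed
    have "C \<subseteq> {q}" by (rule comp_singleton[OF li Cq qK KD fc])
    moreover have "compact {q}" by simp
    ultimately show ?thesis by (intro exI[of _ "{q}"]) simp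
  next
    case False
    define v where "v = f x - f x0"
    have v: "v \<noteq> 0" using False unfolding v_def by simp
    have xv: "f x0 + v = f x" unfolding v_def by simp
    have Kd: "K = {z\<in>B. f z \<in> closed_segment (f x0) (f x0 + v)}" unfolding K_def xv ..
    have "\<exists>\<Gamma>. compact \<Gamma> \<and> connected_component_set K q \<subseteq> \<Gamma>" by (rule core[OF lcd oD BD cB M v Kd qK])
    then show ?thesis unfolding Cq .
  qed
  then obtain \<Gamma> where G: "compact \<Gamma>" "C \<subseteq> \<Gamma>" by blast
  have "compact (\<Gamma> \<inter> C)" using G(1) cC by (rule compact_Int_closed)
  moreover have "\<Gamma> \<inter> C = C" using G(2) by blast
  ultimately show "compact C" by simp
qed

theorem lemma2p3:
  fixes D :: "'a::banach set" and f :: "'a \<Rightarrow> 'b::banach" and x0 :: 'a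
  assumes "open D" and "connected D" and "D \<noteq> {}"
    and "local_homeo D f" and "x0 \<in> D"
  shows "(cond_a1 D f \<longrightarrow> cond_b D f x0)
       \<and> (cond_a2 D f \<longrightarrow> cond_b D f x0)
       \<and> (cond_b D f x0 \<longrightarrow> cond_c D f x0)
       \<and> ((\<exists>S::'a set. finite S \<and> span S = UNIV) \<longrightarrow>
            cond_a1 D f \<and> cond_b D f x0 \<and> cond_c D f x0 \<and>
            (local_C1_diffeo D f \<longrightarrow> cond_a2 D f))"
proof (intro conjI impI)
  show "cond_a1 D f \<Longrightarrow> cond_b D f x0" by (rule a1_imp_b)
  show "cond_a2 D f \<Longrightarrow> cond_b D f x0" by (rule a2_imp_b[OF assms(1)])
  show "cond_b D f x0 \<Longrightarrow> cond_c D f x0" by (rule b_imp_c[OF assms(4) assms(1)])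
  assume "\<exists>S::'a set. finite S \<and> span S = UNIV"
  then obtain S :: "'a set" where S: "finite S" "span S = UNIV" by blast
  show a1: "cond_a1 D f" by (rule fd_a1[OF assms(4) assms(1) S])
  show b: "cond_b D f x0" using a1 by (rule a1_imp_b)
  show "cond_c D f x0" using b by (rule b_imp_c[OF assms(4) assms(1)])
  show "local_C1_diffeo D f \<Longrightarrow> cond_a2 D f" by (rule fd_a2[OF _ assms(1) S])
qed

end
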